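(* Assume the setting of the context, and run Algorithm 3 with $\tau = \frac12\sqrt{\mu/L}$, $\alpha=\mu/2$, $\eta = \frac{1}{2\sqrt{\mu L}}$, $\sigma = \frac1{18}\sqrt{\frac{\mu\lambda_{\min}^+(\mathbf{W})}{L\lambda_{\max}(\mathbf{W})}}$, $\nu = \frac{3}{80L}$, $\beta = \frac1{80L}$, $\theta = \frac{18\sqrt{\mu L\lambda_{\max}(\mathbf{W})}}{5\sqrt{\lambda_{\min}^+(\mathbf{W})}}$, $\gamma = \frac{\lambda_{\min}^+(\mathbf{W})}{80L}$, $\lambda = \frac{9\sqrt{\mu L}}{2\sqrt{\lambda_{\min}^+(\mathbf{W})\lambda_{\max}(\mathbf{W})}}$. Let $\rho := \frac1{18}\sqrt{\frac{\mu\lambda_{\min}^+(\mathbf{W})}{L\lambda_{\max}(\mathbf{W})}}$ and \[ \Psi^k := (1+\rho)\Big(\frac1\eta\|x^k-x^*\|^2 + \frac1\theta\|y^k-y^*\|^2 + \frac1\lambda\|z^k-z^*\|^2_{\mathbf{W}^\dagger}\Big) + \frac{2-\tau}{\tau}\mathrm{D}_r(x_f^k,x^* ) + \frac2\sigma\mathrm{D}_h\big((y_f^k,z_f^k),(y^*,z^* )\big). \] Then for all $k\ge0$, $\Psi^{k+1}\le \left(1-\frac{1}{1+\rho^{-1}}\right)\Psi^k$.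
   Context: Let $n\ge2$, $d\ge1$. $F:\mathbb{R}^{nd}\to\mathbb{R}$ is differentiable, $\mu$-strongly convex and $L$-smooth, $0<\mu\le L$. $\mathbf{W}$ is a symmetric positive semidefinite $nd\times nd$ matrix whose kernel is the consensus space $\{(x_1,\dots,x_n)\in(\mathbb{R}^d)^n:x_1=\dots=x_n\}$; $\lambda_{\max}(\mathbf{W})$, $\lambda_{\min}^+(\mathbf{W})$ are its largest and smallest positive eigenvalues. $\mathbf{W}^\dagger$ is the inverse of $\mathbf{W}$ restricted to $\mathrm{range}(\mathbf{W})$, $\|z\|^2_{\mathbf{W}^\dagger}:=\langle\mathbf{W}^\dagger z,z\rangle$ for $z\in\mathrm{range}(\mathbf{W})$. $x^*$ is the unique minimizer of $F$ over $\ker(\mathbf{W})$; $y^* := \nabla F(x^* )-\frac\mu2x^*$, $z^*:=-\nabla F(x^* )\in\mathrm{range}(\mathbf{W})$. $r(x):=F(x)-\frac\mu4\|x\|^2$, $h(y,z):=\frac1\mu\|y+z\|^2+\frac\nu2\|y\|^2$, so $\nabla r(x)=\nabla F(x)-\frac\mu2x$, $\nabla_yh(y,z)=\frac2\mu(y+z)+\nu y$, $\nabla_zh(y,z)=\frac2\mu(y+z)$. For a differentiable convex $g$, $\mathrm{D}_g(u,v):=g(u)-g(v)-\langle\nabla g(v),u-v\rangle$. Algorithm 3: given $x^0,y^0\in\mathbb{R}^{nd}$, $z^0\in\mathrm{range}(\mathbf{W})$, parameters $\eta,\theta,\lambda,\alpha,\beta,\gamma,\nu>0$, $\tau,\sigma\in(0,1)$,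 set $x_f^0=x^0$, $y_f^0=y^0$, $z_f^0=z^0$, and for $k\ge0$: $x_g^k=\tau x^k+(1-\tau)x_f^k$, $y_g^k=\sigma y^k+(1-\sigma)y_f^k$, $z_g^k=\sigma z^k+(1-\sigma)z_f^k$; $(x^{k+1},y^{k+1})$ satisfies $x^{k+1} = x^k + \eta\alpha(x_g^k-x^{k+1}) - \eta\nabla r(x_g^k) + \eta y^{k+1}$ and $y^{k+1} = y^k + \theta\beta(y_g^k - y^{k+1}) - \theta\nabla_y h(y_g^k,z_g^k) + \theta\nu y^{k+1} - \theta x^{k+1}$; $z^{k+1} = z^k + \lambda\gamma(z_g^k - z^{k+1}) - \lambda\mathbf{W}\nabla_z h(y_g^k,z_g^k)$; $x_f^{k+1}=x_g^k+\frac{2\tau}{2-\tau}(x^{k+1}-x^k)$, $y_f^{k+1}=y_g^k+\sigma(y^{k+1}-y^k)$, $z_f^{k+1}=z_g^k+\sigma(z^{k+1}-z^k)$. *)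

theory Defs
  imports "HOL-Analysis.Analysis"
begin

text \<open>Vectors of (R^d)^n are modelled as real^'d^'n; the nd x nd matrix W as a linear
operator on this space.\<close>

definition strongly_convex :: "real \<Rightarrow> ('a::real_inner \<Rightarrow> real) \<Rightarrow> bool" where
  "strongly_convex mu F \<longleftrightarrow>
     (\<forall>x y t. 0 \<le> t \<and> t \<le> 1 \<longrightarrow>
        F (t *\<^sub>R x + (1 - t) *\<^sub>R y) \<le> t * F x + (1 - t) * F y - mu / 2 * t * (1 - t) * (norm (x - y))\<^sup>2)"

definition lipschitz_gradient :: "real \<Rightarrow> ('a::real_inner \<Rightarrow> 'a) \<Rightarrow> bool" where
  "lipschitz_gradient L g \<longleftrightarrow> (\<forall>x y. norm (g x - g y) \<le> L * norm (x - y))"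

definition consensus :: "(real^'d^'n) set" where
  "consensus = {x. \<forall>i j. x $ i = x $ j}"

definition eigenvalues :: "(real^'d^'n \<Rightarrow> real^'d^'n) \<Rightarrow> real set" where
  "eigenvalues W = {l. \<exists>v. v \<noteq> 0 \<and> W v = l *\<^sub>R v}"

definition lambda_max :: "(real^'d^'n \<Rightarrow> real^'d^'n) \<Rightarrow> real" where
  "lambda_max W = Max (eigenvalues W)"

definition lambda_min_pos :: "(real^'d^'n \<Rightarrow> real^'d^'n) \<Rightarrow> real" where
  "lambda_min_pos W = Min {l \<in> eigenvalues W. 0 < l}"

definition Wdag :: "(real^'d^'n \<Rightarrow> real^'d^'n) \<Rightarrow> real^'d^'n \<Rightarrow> real^'d^'n" where
  "Wdag W z = (THE u. u \<in> range W \<and> W u = z)"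

definition Wdag_sqnorm :: "(real^'d^'n \<Rightarrow> real^'d^'n) \<Rightarrow> real^'d^'n \<Rightarrow> real" where
  "Wdag_sqnorm W z = Wdag W z \<bullet> z"

definition bregman :: "('a::real_inner \<Rightarrow> real) \<Rightarrow> ('a \<Rightarrow> 'a) \<Rightarrow> 'a \<Rightarrow> 'a \<Rightarrow> real" where
  "bregman g dg u v = g u - g v - dg v \<bullet> (u - v)"

end

theory Submission
  imports Defs
begin

lemma descent:
  fixes F :: "'a::real_inner \<Rightarrow> real" and g :: "'a \<Rightarrow> 'a"
  assumes der: "\<And>u. (F has_derivative (\<lambda>h. g u \<bullet> h)) (at u)"
    and lip: "lipschitz_gradient L g"
  shows "F u \<le> F v + g v \<bullet> (u - v) + L/2 * (norm (u - v))\<^sup>2"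
proof -
  define d where "d = u - v"
  define phi where "phi t = F (v + t *\<^sub>R d) - t * (g v \<bullet> d) - L/2 * t^2 * (norm d)^2" for t
  have D: "DERIV phi t :> (g (v + t *\<^sub>R d) \<bullet> d - g v \<bullet> d - L * t * (norm d)^2)" for t
  proof -
    have "((\<lambda>t. v + t *\<^sub>R d) has_derivative (\<lambda>h. h *\<^sub>R d)) (at t)"
      by (auto intro!: derivative_eq_intros)
    from has_derivative_compose[OF this der]
    have "((\<lambda>t. F (v + t *\<^sub>R d)) has_derivative (\<lambda>h. g (v + t *\<^sub>R d) \<bullet> (h *\<^sub>R d))) (at t)" .
    hence "((\<lambda>t. F (v + t *\<^sub>R d)) has_real_derivative (g (v + t *\<^sub>R d) \<bullet> d)) (at t)"
      by (simp add: has_real_derivative_iff_has_vector_derivative has_vector_derivative_def mult.commute)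
    then show ?thesis unfolding phi_def
      by (auto intro!: derivative_eq_intros simp: power2_eq_square)
  qed
  have "phi 1 \<le> phi 0"
  proof (rule DERIV_nonpos_imp_nonincreasing[of 0 1 phi])
    fix t :: real assume t: "0 \<le> t" "t \<le> 1"
    have "g (v + t *\<^sub>R d) \<bullet> d - g v \<bullet> d = (g (v + t *\<^sub>R d) - g v) \<bullet> d" by (simp add: inner_diff_left)
    also have "\<dots> \<le> norm (g (v + t *\<^sub>R d) - g v) * norm d" by (rule norm_cauchy_schwarz)
    also have "\<dots> \<le> (L * norm (t *\<^sub>R d)) * norm d"
    proof (rule mult_right_mono)
      have "norm (g (v + t *\<^sub>R d) - g v) \<le> L * norm ((v + t *\<^sub>R d) - v)"
        using lip unfolding lipschitz_gradient_def by blast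
      then show "norm (g (v + t *\<^sub>R d) - g v) \<le> L * norm (t *\<^sub>R d)" by simp
    qed simp
    also have "\<dots> = L * t * (norm d)^2" using t by (simp add: power2_eq_square)
    finally show "\<exists>y. DERIV phi t :> y \<and> y \<le> 0" using D by (intro exI[of _ "g (v + t *\<^sub>R d) \<bullet> d - g v \<bullet> d - L * t * (norm d)^2"]) auto
  qed simp
  then show ?thesis unfolding phi_def d_def by simp
qed

lemma sc_first_order:
  fixes F :: "'a::real_inner \<Rightarrow> real" and g :: "'a \<Rightarrow> 'a"
  assumes der: "\<And>u. (F has_derivative (\<lambda>h. g u \<bullet> h)) (at u)"
    and sc: "strongly_convex mu F"
  shows "F v + g v \<bullet> (u - v) + mu/2 * (norm (u - v))\<^sup>2 \<le> F u"
proof -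
  define d where "d = u - v"
  have "((\<lambda>t. v + t *\<^sub>R d) has_derivative (\<lambda>h. h *\<^sub>R d)) (at 0)"
    by (auto intro!: derivative_eq_intros)
  from has_derivative_compose[OF this der]
  have "((\<lambda>t. F (v + t *\<^sub>R d)) has_derivative (\<lambda>h. g (v + 0 *\<^sub>R d) \<bullet> (h *\<^sub>R d))) (at 0)" .
  hence "((\<lambda>t. F (v + t *\<^sub>R d)) has_real_derivative (g v \<bullet> d)) (at 0)"
    by (simp add: has_real_derivative_iff_has_vector_derivative has_vector_derivative_def mult.commute)
  hence "((\<lambda>t. (F (v + t *\<^sub>R d) - F v) / t) \<longlongrightarrow> g v \<bullet> d) (at 0)"
    by (simp add: has_field_derivative_iff)
  hence L1: "((\<lambda>t. (F (v + t *\<^sub>R d) - F v) / t) \<longlongrightarrow> g v \<bullet> d) (at_right 0)"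
    by (rule tendsto_mono[OF at_le, rotated]) simp
  have L2: "((\<lambda>t. F u - F v - mu/2 * (1 - t) * (norm d)^2) \<longlongrightarrow> F u - F v - mu/2 * (1 - 0) * (norm d)^2) (at_right 0)"
    by (intro tendsto_intros)
  have ev: "eventually (\<lambda>t. (F (v + t *\<^sub>R d) - F v) / t \<le> F u - F v - mu/2 * (1 - t) * (norm d)^2) (at_right (0::real))"
    unfolding eventually_at_right_field
  proof (intro exI[of _ 1] conjI allI impI)
    fix t :: real assume t0: "0 < t" and t1: "t < 1"
    hence t: "0 < t \<and> t < 1" by simp
    have "v + t *\<^sub>R d = t *\<^sub>R u + (1 - t) *\<^sub>R v" unfolding d_def by (simp add: algebra_simps)
    hence "F (v + t *\<^sub>R d) \<le> t * F u + (1 - t) * F v - mu / 2 * t * (1 - t) * (norm (u - v))\<^sup>2"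
      using sc t unfolding strongly_convex_def by auto
    hence "F (v + t *\<^sub>R d) - F v \<le> t * (F u - F v - mu/2 * (1 - t) * (norm d)^2)"
      unfolding d_def by (simp add: algebra_simps)
    then show "(F (v + t *\<^sub>R d) - F v) / t \<le> F u - F v - mu/2 * (1 - t) * (norm d)^2"
      using t by (simp add: divide_le_eq mult.commute)
  qed simp
  have "g v \<bullet> d \<le> F u - F v - mu/2 * (1 - 0) * (norm d)^2"
    by (rule tendsto_le[OF _ L2 L1 ev]) simp
  then show ?thesis unfolding d_def by simp
qed

lemma fermat_dir:
  fixes F :: "'a::real_inner \<Rightarrow> real" and g :: "'a \<Rightarrow> 'a"
  assumes der: "\<And>u. (F has_derivative (\<lambda>h. g u \<bullet> h)) (at u)"
    and min: "\<And>t::real. F x \<le> F (x + t *\<^sub>R c)"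
  shows "g x \<bullet> c = 0"
proof -
  have "((\<lambda>t. x + t *\<^sub>R c) has_derivative (\<lambda>h. h *\<^sub>R c)) (at 0)"
    by (auto intro!: derivative_eq_intros)
  from has_derivative_compose[OF this der]
  have "((\<lambda>t. F (x + t *\<^sub>R c)) has_derivative (\<lambda>h. g (x + 0 *\<^sub>R c) \<bullet> (h *\<^sub>R c))) (at 0)" .
  hence "((\<lambda>t. F (x + t *\<^sub>R c)) has_real_derivative (g x \<bullet> c)) (at 0)"
    by (simp add: has_real_derivative_iff_has_vector_derivative has_vector_derivative_def mult.commute)
  then show ?thesis
    by (rule DERIV_local_min[where d=1]) (use min in auto)
qed


lemma quad_nonneg:
  fixes a b c :: real
  assumes q: "\<And>t. 0 \<le> a + 2*b*t + c*t^2" and c: "0 \<le> c"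
  shows "b^2 \<le> a*c"
proof (cases "c = 0")
  case True
  show ?thesis
  proof (cases "b = 0")
    case False
    have "0 \<le> a + 2*b*(-(a+1)/(2*b)) + c*(-(a+1)/(2*b))^2" by (rule q)
    with True False show ?thesis by (simp add: field_simps)
  qed (use True q[of 0] in simp)
next
  case False
  hence cp: "c > 0" using c by simp
  have "0 \<le> a + 2*b*(-b/c) + c*(-b/c)^2" by (rule q)
  also have "\<dots> = (a*c - b^2)/c" using cp by (simp add: field_simps power2_eq_square)
  finally show ?thesis using cp by (simp add: divide_nonneg_pos zero_le_divide_iff)
qed

lemma semi_cs:
  fixes A :: "'a::real_inner \<Rightarrow> 'a"
  assumes lin: "linear A" and sym: "\<And>u v. A u \<bullet> v = u \<bullet> A v"
    and S: "subspace S" and psd: "\<And>v. v \<in> S \<Longrightarrow> 0 \<le> A v \<bullet> v"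
    and u: "u \<in> S" and w: "w \<in> S"
  shows "(A u \<bullet> w)^2 \<le> (A u \<bullet> u) * (A w \<bullet> w)"
proof -
  have "(A w \<bullet> u)^2 \<le> (A u \<bullet> u) * (A w \<bullet> w)"
  proof (rule quad_nonneg)
    fix t :: real
    have "u + t *\<^sub>R w \<in> S" using S u w by (simp add: subspace_add subspace_scale)
    hence "0 \<le> A (u + t *\<^sub>R w) \<bullet> (u + t *\<^sub>R w)" by (rule psd)
    also have "\<dots> = A u \<bullet> u + 2 * (A w \<bullet> u) * t + (A w \<bullet> w) * t^2"
      using sym[of u w] inner_commute[of u "A w"] by (simp add: linear_add[OF lin] linear_scale[OF lin] inner_add_left inner_add_right
          algebra_simps power2_eq_square)
    finally show "0 \<le> A u \<bullet> u + 2 * (A w \<bullet> u) * t + (A w \<bullet> w) * t^2" .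
  qed (use psd w in auto)
  moreover have "A w \<bullet> u = A u \<bullet> w" using sym[of w u] by (simp add: inner_commute)
  ultimately show ?thesis by simp
qed

lemma eig_finite:
  fixes W :: "real^'d^'n \<Rightarrow> real^'d^'n"
  assumes sym: "\<And>u v. W u \<bullet> v = u \<bullet> W v"
  shows "finite (eigenvalues W)"
proof -
  define f where "f l = (SOME v. v \<noteq> 0 \<and> W v = l *\<^sub>R v)" for l
  have f: "f l \<noteq> 0 \<and> W (f l) = l *\<^sub>R f l" if hl: "l \<in> eigenvalues W" for l
  proof -
    obtain v where "v \<noteq> 0 \<and> W v = l *\<^sub>R v" using hl unfolding eigenvalues_def by auto
    then show ?thesis unfolding f_def by (rule someI)
  qed
  have inj: "inj_on f (eigenvalues W)"
  proof (rule inj_onI)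
    fix l l' assume l: "l \<in> eigenvalues W" and l': "l' \<in> eigenvalues W" and e: "f l = f l'"
    have "l *\<^sub>R f l = W (f l)" using f[OF l] by simp
    also have "\<dots> = l' *\<^sub>R f l" using f[OF l'] e by simp
    finally have "l *\<^sub>R f l = l' *\<^sub>R f l" .
    thus "l = l'" using f[OF l] by (simp add: scaleR_cancel_right)
  qed
  have po: "pairwise orthogonal (f ` eigenvalues W)"
    unfolding pairwise_def orthogonal_def
  proof (intro ballI impI)
    fix a b assume "a \<in> f ` eigenvalues W" "b \<in> f ` eigenvalues W" "a \<noteq> b"
    then obtain l l' where l: "l \<in> eigenvalues W" and l': "l' \<in> eigenvalues W" and ab: "a = f l" "b = f l'"
      by blast
    have "l \<noteq> l'" using \<open>a \<noteq> b\<close> ab by blast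
    have "l * (f l \<bullet> f l') = W (f l) \<bullet> f l'" using f[OF l] by simp
    also have "\<dots> = f l \<bullet> W (f l')" by (rule sym)
    also have "\<dots> = l' * (f l \<bullet> f l')" using f[OF l'] by simp
    finally have "(l - l') * (f l \<bullet> f l') = 0" by (simp add: algebra_simps)
    with \<open>l \<noteq> l'\<close> show "a \<bullet> b = 0" using ab by simp
  qed
  have "0 \<notin> f ` eigenvalues W"
  proof
    assume "0 \<in> f ` eigenvalues W"
    then obtain l where "l \<in> eigenvalues W" "0 = f l" by (auto simp only: image_iff)
    with f show False by metis
  qed
  with po have "independent (f ` eigenvalues W)" by (rule pairwise_orthogonal_independent)
  hence "finite (f ` eigenvalues W)" by (rule independent_bound[THEN conjunct1])
  thus ?thesis using inj by (rule finite_imageD)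
qed

lemma range_ker_zero:
  fixes W :: "'a::real_inner \<Rightarrow> 'a"
  assumes sym: "\<And>u v. W u \<bullet> v = u \<bullet> W v" and v: "v \<in> range W" and k: "W v = 0"
  shows "v = 0"
proof -
  obtain u where u: "v = W u" using v by auto
  have "v \<bullet> v = u \<bullet> W v" using sym[of u v] u by simp
  also have "\<dots> = 0" using k by simp
  finally show ?thesis by simp
qed

lemma spec_max:
  fixes W :: "real^'d^'n \<Rightarrow> real^'d^'n"
  assumes lin: "linear W" and sym: "\<And>u v. W u \<bullet> v = u \<bullet> W v" and psd: "\<And>u. 0 \<le> W u \<bullet> u"
  shows "\<exists>M \<in> eigenvalues W. \<forall>v. W v \<bullet> v \<le> M * (norm v)^2"
proof -
  have cont: "continuous_on (sphere 0 1) (\<lambda>u. W u \<bullet> u)"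
    using lin by (intro continuous_intros linear_continuous_on) (simp add: linear_conv_bounded_linear)
  from continuous_attains_sup[OF compact_sphere _ cont]
  obtain u0 where u0: "u0 \<in> sphere 0 1" and mx0: "\<forall>y\<in>sphere 0 1. W y \<bullet> y \<le> W u0 \<bullet> u0"
    by auto
  have mx: "\<And>y. y \<in> sphere 0 1 \<Longrightarrow> W y \<bullet> y \<le> W u0 \<bullet> u0" using mx0 by blast
  define M where "M = W u0 \<bullet> u0"
  have n0: "norm u0 = 1" using u0 by simp
  have bound: "W v \<bullet> v \<le> M * (norm v)^2" for v
  proof (cases "v = 0")
    case True then show ?thesis using lin by (simp add: linear_0)
  next
    case False
    define y where "y = (1 / norm v) *\<^sub>R v"
    have "y \<in> sphere 0 1" using False by (simp add: y_def)
    hence "W y \<bullet> y \<le> M" using mx M_def by simp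
    moreover have "W y \<bullet> y = (W v \<bullet> v) / (norm v)^2"
      using lin by (simp add: y_def linear_scale power2_eq_square)
    ultimately show ?thesis using False by (simp add: divide_le_eq mult.commute)
  qed
  define A where "A v = M *\<^sub>R v - W v" for v
  have linA: "linear A" using lin unfolding A_def linear_iff by (simp add: algebra_simps)
  have symA: "A u \<bullet> v = u \<bullet> A v" for u v unfolding A_def using sym[of u v] by (simp add: inner_diff_left inner_diff_right)
  have psdA: "0 \<le> A v \<bullet> v" for v using bound[of v] unfolding A_def by (simp add: inner_diff_left power2_norm_eq_inner)
  have A0: "A u0 \<bullet> u0 = 0" unfolding A_def M_def using n0 by (simp add: inner_diff_left power2_norm_eq_inner[symmetric])
  have "(A u0 \<bullet> A u0)^2 \<le> (A u0 \<bullet> u0) * (A (A u0) \<bullet> A u0)"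
    by (rule semi_cs[OF linA symA subspace_UNIV psdA]) auto
  hence "A u0 \<bullet> A u0 = 0" using A0 by simp
  hence "W u0 = M *\<^sub>R u0" unfolding A_def by simp
  moreover have "u0 \<noteq> 0" using n0 by auto
  ultimately have "M \<in> eigenvalues W" unfolding eigenvalues_def by auto
  with bound show ?thesis by blast
qed

lemma spec_min:
  fixes W :: "real^'d^'n \<Rightarrow> real^'d^'n"
  assumes lin: "linear W" and sym: "\<And>u v. W u \<bullet> v = u \<bullet> W v" and psd: "\<And>u. 0 \<le> W u \<bullet> u"
    and nz: "W w \<noteq> 0"
  shows "\<exists>m \<in> eigenvalues W. 0 < m \<and> (\<forall>v \<in> range W. m * (norm v)^2 \<le> W v \<bullet> v)"
proof -
  have sub: "subspace (range W)" using lin by (simp add: linear_subspace_image)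
  have cont: "continuous_on (sphere 0 1 \<inter> range W) (\<lambda>u. W u \<bullet> u)"
    using lin by (intro continuous_intros linear_continuous_on) (simp add: linear_conv_bounded_linear)
  have ne: "sphere 0 1 \<inter> range W \<noteq> {}"
  proof -
    have "(1 / norm (W w)) *\<^sub>R W w \<in> sphere 0 1" using nz by simp
    moreover have "(1 / norm (W w)) *\<^sub>R W w \<in> range W" using sub by (simp add: subspace_scale)
    ultimately show ?thesis by blast
  qed
  have cpt: "compact (sphere 0 1 \<inter> range W)"
    by (intro compact_Int_closed compact_sphere closed_subspace sub)
  from continuous_attains_inf[OF cpt ne cont]
  obtain u0 where u0: "u0 \<in> sphere 0 1 \<inter> range W" and mn0: "\<forall>y\<in>sphere 0 1 \<inter> range W. W u0 \<bullet> u0 \<le> W y \<bullet> y"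
    by blast
  have mn: "\<And>y. y \<in> sphere 0 1 \<inter> range W \<Longrightarrow> W u0 \<bullet> u0 \<le> W y \<bullet> y" using mn0 by blast
  define m where "m = W u0 \<bullet> u0"
  have n0: "norm u0 = 1" and u0r: "u0 \<in> range W" using u0 by auto
  have bound: "m * (norm v)^2 \<le> W v \<bullet> v" if vr: "v \<in> range W" for v
  proof (cases "v = 0")
    case True then show ?thesis using lin by (simp add: linear_0)
  next
    case False
    define y where "y = (1 / norm v) *\<^sub>R v"
    have "y \<in> sphere 0 1 \<inter> range W" using False vr sub by (simp add: y_def subspace_scale)
    hence "m \<le> W y \<bullet> y" using mn m_def by simp
    moreover have "W y \<bullet> y = (W v \<bullet> v) / (norm v)^2"
      using lin by (simp add: y_def linear_scale power2_eq_square)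
    ultimately show ?thesis using False by (simp add: le_divide_eq mult.commute)
  qed
  define A where "A v = W v - m *\<^sub>R v" for v
  have linA: "linear A" using lin unfolding A_def linear_iff by (simp add: algebra_simps)
  have symA: "A u \<bullet> v = u \<bullet> A v" for u v unfolding A_def using sym[of u v] by (simp add: inner_diff_left inner_diff_right)
  have psdA: "0 \<le> A v \<bullet> v" if "v \<in> range W" for v using bound[OF that] unfolding A_def by (simp add: inner_diff_left power2_norm_eq_inner)
  have A0: "A u0 \<bullet> u0 = 0" unfolding A_def m_def using n0 by (simp add: inner_diff_left power2_norm_eq_inner[symmetric])
  have Ar: "A u0 \<in> range W" unfolding A_def using sub u0r by (intro subspace_diff subspace_scale) auto
  have "(A u0 \<bullet> A u0)^2 \<le> (A u0 \<bullet> u0) * (A (A u0) \<bullet> A u0)"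
    by (rule semi_cs[OF linA symA sub psdA u0r Ar])
  hence "A u0 \<bullet> A u0 = 0" using A0 by simp
  hence eq: "W u0 = m *\<^sub>R u0" unfolding A_def by simp
  moreover have "u0 \<noteq> 0" using n0 by auto
  ultimately have "m \<in> eigenvalues W" unfolding eigenvalues_def by auto
  moreover have "m \<noteq> 0"
  proof
    assume "m = 0"
    hence "W u0 = 0" using eq by simp
    hence "u0 = 0" by (rule range_ker_zero[OF sym u0r])
    with n0 show False by simp
  qed
  moreover have "0 \<le> m" unfolding m_def by (rule psd)
  ultimately show ?thesis using bound by (intro bexI[of _ m]) auto
qed

lemma spectral:
  fixes W :: "real^'d^'n \<Rightarrow> real^'d^'n"
  assumes lin: "linear W" and sym: "\<And>u v. W u \<bullet> v = u \<bullet> W v" and psd: "\<And>u. 0 \<le> W u \<bullet> u"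
    and nz: "W w \<noteq> 0"
  shows "\<And>v. W v \<bullet> v \<le> lambda_max W * (norm v)^2"
    and "\<And>v. v \<in> range W \<Longrightarrow> lambda_min_pos W * (norm v)^2 \<le> W v \<bullet> v"
    and "0 < lambda_min_pos W" and "lambda_min_pos W \<le> lambda_max W"
proof -
  have fin: "finite (eigenvalues W)" by (rule eig_finite[OF sym])
  obtain M where M: "M \<in> eigenvalues W" "\<And>v. W v \<bullet> v \<le> M * (norm v)^2"
    using spec_max[OF lin sym psd] by blast
  obtain m where m: "m \<in> eigenvalues W" "0 < m" "\<And>v. v \<in> range W \<Longrightarrow> m * (norm v)^2 \<le> W v \<bullet> v"
    using spec_min[OF lin sym psd nz] by blast
  have finp: "finite {l \<in> eigenvalues W. 0 < l}" using fin by simp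
  have mem: "m \<in> {l \<in> eigenvalues W. 0 < l}" using m by simp
  have "M \<le> lambda_max W" unfolding lambda_max_def using fin M(1) by simp
  then show "W v \<bullet> v \<le> lambda_max W * (norm v)^2" for v
    using M(2)[of v] by (meson order_trans mult_right_mono zero_le_power2)
  have mm: "lambda_min_pos W \<le> m" unfolding lambda_min_pos_def using finp mem by (rule Min_le)
  show "lambda_min_pos W * (norm v)^2 \<le> W v \<bullet> v" if "v \<in> range W" for v
    using m(3)[OF that] mm by (meson order_trans mult_right_mono zero_le_power2)
  have lin_mem: "lambda_min_pos W \<in> {l \<in> eigenvalues W. 0 < l}" unfolding lambda_min_pos_def
    using finp mem by (intro Min_in) auto
  then show "0 < lambda_min_pos W" by simp
  show "lambda_min_pos W \<le> lambda_max W" unfolding lambda_max_def using fin lin_mem by simp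
qed

lemma accel_id:
  fixes w wf w1 :: "'a::real_inner" and s :: real
  assumes s: "0 < s"
  defines "wg \<equiv> s *\<^sub>R w + (1 - s) *\<^sub>R wf"
  defines "wf1 \<equiv> wg + s *\<^sub>R (w1 - w)"
  shows "- 2 * (wg \<bullet> w1) = - (1/s) * (norm wf1)^2 + ((1-s)/s) * (norm wf)^2 + (1/s) * (norm (wf1 - wg))^2
          - (norm wg)^2 - ((1-s)/s) * (norm (wf - wg))^2"
  using s unfolding wg_def wf1_def power2_norm_eq_inner
  by (simp add: inner_simps inner_commute field_simps)


lemma polar1: "2 * ((a - b) \<bullet> a) = (norm a)^2 - (norm b)^2 + (norm (a - b))^2" for a b :: "'a::real_inner"
  unfolding power2_norm_eq_inner by (simp add: inner_simps inner_commute)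

lemma polar2: "2 * ((g - a) \<bullet> a) = (norm g)^2 - (norm a)^2 - (norm (g - a))^2" for a g :: "'a::real_inner"
  unfolding power2_norm_eq_inner by (simp add: inner_simps inner_commute)

lemma xaccel_scalar:
  fixes A B C D E G r1 rs rf rg tau k m c :: real
  assumes kc: "k*c = 2" and h1: "k - m - 1 = 0" and h2: "tau*(k+1) = 2" and h3: "(1-tau)*(k+1) - m = 0"
    and h4: "tau*(2+m) = 2" and h5: "m*tau - 2*(1-tau) = 0"
  shows "-2*(D + E - A - B) = - (k * (r1 - rs - (tau*B + (1-tau)*C + c*A)))
     + m * (rf - rs - C)
     - (rg - rs - (tau*B + (1-tau)*C)) + k * (r1 - rg - c*D)
     - 2 * (rs - rg - (- tau*E - (1-tau)*G)) - m * (rf - rg - (tau*G - tau*E))"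
proof -
  have "- (k * (r1 - rs - (tau*B + (1-tau)*C + c*A)))
     + m * (rf - rs - C)
     - (rg - rs - (tau*B + (1-tau)*C)) + k * (r1 - rg - c*D)
     - 2 * (rs - rg - (- tau*E - (1-tau)*G)) - m * (rf - rg - (tau*G - tau*E))
     = (k*c)*A - (k*c)*D + (k-m-1)*rs - (k-m-1)*rg + (tau*(k+1))*B + ((1-tau)*(k+1) - m)*C
       - (tau*(2+m))*E + (m*tau - 2*(1-tau))*G"
    by (simp add: algebra_simps)
  also have "\<dots> = -2*(D + E - A - B)" unfolding kc h1 h2 h3 h4 h5 by simp
  finally show ?thesis by simp
qed

lemma xaccel_id:
  fixes x xf x1 xs gg ys :: "'a::real_inner" and r1 rs rf rg tau :: real
  assumes t: "0 < tau" "tau < 1"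
  defines "xg \<equiv> tau *\<^sub>R x + (1 - tau) *\<^sub>R xf"
  defines "xf1 \<equiv> xg + (2 * tau / (2 - tau)) *\<^sub>R (x1 - x)"
  shows "- 2 * ((gg - ys) \<bullet> (x1 - xs)) = - (((2-tau)/tau) * (r1 - rs - ys \<bullet> (xf1 - xs))) + (2*(1-tau)/tau) * (rf - rs - ys \<bullet> (xf - xs))
     - (rg - rs - ys \<bullet> (xg - xs)) + ((2-tau)/tau) * (r1 - rg - gg \<bullet> (xf1 - xg)) - 2 * (rs - rg - gg \<bullet> (xs - xg)) - (2*(1-tau)/tau) * (rf - rg - gg \<bullet> (xf - xg))"
proof -
  have e1: "ys \<bullet> (xf1 - xs) = tau * (ys \<bullet> (x - xs)) + (1-tau) * (ys \<bullet> (xf - xs)) + (2*tau/(2-tau)) * (ys \<bullet> (x1 - x))"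
    unfolding xf1_def xg_def by (simp add: inner_simps algebra_simps) (simp add: diff_divide_distrib add_divide_distrib)
  have e2: "gg \<bullet> (xf1 - xg) = (2*tau/(2-tau)) * (gg \<bullet> (x1 - x))"
    unfolding xf1_def by (simp add: inner_simps)
  have e3: "ys \<bullet> (xg - xs) = tau * (ys \<bullet> (x - xs)) + (1-tau) * (ys \<bullet> (xf - xs))"
    unfolding xg_def by (simp add: inner_simps algebra_simps)
  have e4: "gg \<bullet> (xs - xg) = - tau * (gg \<bullet> (x - xs)) - (1-tau) * (gg \<bullet> (xf - xs))"
    unfolding xg_def by (simp add: inner_simps algebra_simps)
  have e5: "gg \<bullet> (xf - xg) = tau * (gg \<bullet> (xf - xs)) - tau * (gg \<bullet> (x - xs))"
    unfolding xg_def by (simp add: inner_simps algebra_simps)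
  have e6: "(gg - ys) \<bullet> (x1 - xs) = gg \<bullet> (x1 - x) + gg \<bullet> (x - xs) - ys \<bullet> (x1 - x) - ys \<bullet> (x - xs)"
    by (simp add: inner_simps algebra_simps)
  have t2: "2 - tau \<noteq> 0" using t by simp
  show ?thesis unfolding e1 e2 e3 e4 e5 e6
    by (rule xaccel_scalar) (use t t2 in \<open>simp_all add: field_simps\<close>)
qed

lemma xcomb:
  fixes ie a k m P1 P0 S Gx Sg Gn C I J Dr1 Dr0 Dg D1g Dsg Dfg he hL :: real
  assumes "ie * P1 - ie * P0 + ie * S = 2 * (a * I) - 2 * J + 2 * C"
    "2 * (a * I) = a * Gx - a * P1 - a * Sg"
    "- 2 * J = - (k * Dr1) + m * Dr0 - Dg + k * D1g - 2 * Dsg - m * Dfg"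
    "k * D1g \<le> he * S" "0 \<le> m * Dfg" "a * Gx \<le> Dg + Dsg" "hL * Gn \<le> Dsg" "ie * S = 2 * (he * S)"
  shows "ie * P1 + a * P1 + k * Dr1 + he * S + a * Sg + hL * Gn \<le> ie * P0 + m * Dr0 + 2 * C"
  using assms by linarith

lemma xblock:
  fixes x xf x1 xs gg ys y1 xg xf1 :: "'a::real_inner" and r1 rs rf rg tau eta alpha L :: real
  assumes t: "0 < tau" "tau < 1" and eta: "0 < eta" and alpha: "0 \<le> alpha" and L: "0 < L"
  assumes hxg: "xg = tau *\<^sub>R x + (1 - tau) *\<^sub>R xf"
    and hxf1: "xf1 = xg + (2 * tau / (2 - tau)) *\<^sub>R (x1 - x)"
    and step: "x1 = x + (eta * alpha) *\<^sub>R (xg - x1) - eta *\<^sub>R gg + eta *\<^sub>R y1"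
    and H1: "r1 - rg - gg \<bullet> (xf1 - xg) \<le> L/2 * (norm (xf1 - xg))^2"
    and H2: "0 \<le> rf - rg - gg \<bullet> (xf - xg)"
    and H3: "alpha * (norm (xg - xs))^2 \<le> (rg - rs - ys \<bullet> (xg - xs)) + (rs - rg - gg \<bullet> (xs - xg))"
    and H4: "1/(2*L) * (norm (gg - ys))^2 \<le> rs - rg - gg \<bullet> (xs - xg)"
    and P: "2 * tau * L / (2 - tau) \<le> 1 / (2 * eta)"
  shows "(1/eta) * (norm (x1 - xs))^2 + alpha * (norm (x1 - xs))^2 + ((2-tau)/tau) * (r1 - rs - ys \<bullet> (xf1 - xs))
      + 1/(2*eta) * (norm (x1 - x))^2 + alpha * (norm (xg - x1))^2 + 1/(2*L) * (norm (gg - ys))^2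
    \<le> (1/eta) * (norm (x - xs))^2 + (2*(1-tau)/tau) * (rf - rs - ys \<bullet> (xf - xs)) + 2 * ((y1 - ys) \<bullet> (x1 - xs))"
proof -
  have sstep: "(1/eta) *\<^sub>R (x1 - x) = alpha *\<^sub>R (xg - x1) - (gg - ys) + (y1 - ys)"
  proof -
    have "x1 - x = eta *\<^sub>R (alpha *\<^sub>R (xg - x1) - (gg - ys) + (y1 - ys))"
      using step by (simp add: algebra_simps)
    then show ?thesis using eta by simp
  qed
  have E1: "(1/eta) * (norm (x1 - xs))^2 - (1/eta) * (norm (x - xs))^2 + (1/eta) * (norm (x1 - x))^2
      = 2 * (alpha * ((xg - x1) \<bullet> (x1 - xs))) - 2 * ((gg - ys) \<bullet> (x1 - xs)) + 2 * ((y1 - ys) \<bullet> (x1 - xs))"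
  proof -
    have "(1/eta) * ((norm (x1 - xs))^2 - (norm (x - xs))^2 + (norm (x1 - x))^2) = (1/eta) * (2 * ((x1 - x) \<bullet> (x1 - xs)))"
      using polar1[of "x1 - xs" "x - xs"] by simp
    also have "\<dots> = 2 * (((1/eta) *\<^sub>R (x1 - x)) \<bullet> (x1 - xs))" by simp
    also have "\<dots> = 2 * (alpha * ((xg - x1) \<bullet> (x1 - xs))) - 2 * ((gg - ys) \<bullet> (x1 - xs)) + 2 * ((y1 - ys) \<bullet> (x1 - xs))"
      unfolding sstep by (simp add: inner_simps algebra_simps)
    finally show ?thesis by (simp add: algebra_simps)
  qed
  have E2: "2 * (alpha * ((xg - x1) \<bullet> (x1 - xs))) = alpha * (norm (xg - xs))^2 - alpha * (norm (x1 - xs))^2 - alpha * (norm (xg - x1))^2"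
  proof -
    have "2 * ((xg - x1) \<bullet> (x1 - xs)) = (norm (xg - xs))^2 - (norm (x1 - xs))^2 - (norm (xg - x1))^2"
      using polar2[of "xg - xs" "x1 - xs"] by simp
    then have "alpha * (2 * ((xg - x1) \<bullet> (x1 - xs))) = alpha * ((norm (xg - xs))^2 - (norm (x1 - xs))^2 - (norm (xg - x1))^2)"
      by simp
    then show ?thesis by (simp only: right_diff_distrib mult.left_commute)
  qed
  have E3: "- 2 * ((gg - ys) \<bullet> (x1 - xs)) = - (((2-tau)/tau) * (r1 - rs - ys \<bullet> (xf1 - xs))) + (2*(1-tau)/tau) * (rf - rs - ys \<bullet> (xf - xs))
     - (rg - rs - ys \<bullet> (xg - xs)) + ((2-tau)/tau) * (r1 - rg - gg \<bullet> (xf1 - xg)) - 2 * (rs - rg - gg \<bullet> (xs - xg)) - (2*(1-tau)/tau) * (rf - rg - gg \<bullet> (xf - xg))"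
    unfolding hxf1 hxg by (rule xaccel_id[OF t])
  have t2: "0 < 2 - tau" using t by simp
  have I1: "((2-tau)/tau) * (r1 - rg - gg \<bullet> (xf1 - xg)) \<le> 1/(2*eta) * (norm (x1 - x))^2"
  proof -
    have "((2-tau)/tau) * (r1 - rg - gg \<bullet> (xf1 - xg)) \<le> ((2-tau)/tau) * (L/2 * (norm (xf1 - xg))^2)"
      using H1 t t2 by (intro mult_left_mono) auto
    also have "(norm (xf1 - xg))^2 = (2 * tau / (2 - tau))^2 * (norm (x1 - x))^2"
      unfolding hxf1 by (simp add: power_mult_distrib power_divide power2_abs)
    also have "((2-tau)/tau) * (L/2 * ((2 * tau / (2 - tau))^2 * (norm (x1 - x))^2)) = (2 * tau * L / (2 - tau)) * (norm (x1 - x))^2"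
    proof -
      have gen: "s/tau * (L/2 * ((2*tau/s)^2 * S)) = 2*tau*L/s * S" if "s \<noteq> 0" for s S
        using that t by (simp add: field_simps power2_eq_square)
      show ?thesis using gen[of "2 - tau" "(norm (x1 - x))^2"] t2 by simp
    qed
    also have "\<dots> \<le> 1/(2*eta) * (norm (x1 - x))^2"
      using P by (intro mult_right_mono) auto
    finally show ?thesis .
  qed
  have I2: "0 \<le> (2*(1-tau)/tau) * (rf - rg - gg \<bullet> (xf - xg))"
    using H2 t by simp
  have hh: "(1/eta) * (norm (x1 - x))^2 = 2 * (1/(2*eta) * (norm (x1 - x))^2)" by simp
  show ?thesis by (rule xcomb[OF E1 E2 E3 I1 I2 H3 H4 hh])
qed

definition Qh :: "real \<Rightarrow> real \<Rightarrow> 'a::real_inner \<Rightarrow> 'a \<Rightarrow> real" where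
  "Qh mu nu u v = 1/mu * (norm (u + v))^2 + nu/2 * (norm u)^2"

lemma yblock:
  fixes a a1 g Hy X1 :: "'a::real_inner" and theta beta nu :: real
  assumes th: "0 < theta"
    and step: "a1 - a = (theta*beta) *\<^sub>R (g - a1) - theta *\<^sub>R Hy + (theta*nu) *\<^sub>R a1 - theta *\<^sub>R X1"
  shows "(1/theta) * (norm a1)^2 - (1/theta) * (norm a)^2 + (1/theta) * (norm (a1 - a))^2
     = beta * (norm g)^2 - beta * (norm a1)^2 - beta * (norm (g - a1))^2 - 2 * (Hy \<bullet> a1) + 2 * nu * (norm a1)^2 - 2 * (X1 \<bullet> a1)"
proof -
  have s: "(1/theta) *\<^sub>R (a1 - a) = beta *\<^sub>R (g - a1) - Hy + nu *\<^sub>R a1 - X1"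
    using th unfolding step by (simp add: algebra_simps)
  have "(1/theta) * ((norm a1)^2 - (norm a)^2 + (norm (a1 - a))^2)
      = (1/theta) * (2 * ((a1 - a) \<bullet> a1))"
    using polar1[of a1 a] by simp
  also have "\<dots> = 2 * (((1/theta) *\<^sub>R (a1 - a)) \<bullet> a1)" by simp
  also have "\<dots> = beta * (2 * ((g - a1) \<bullet> a1)) - 2 * (Hy \<bullet> a1) + 2 * nu * (a1 \<bullet> a1) - 2 * (X1 \<bullet> a1)"
    unfolding s by (simp add: inner_simps algebra_simps)
  also have "\<dots> = beta * (norm g)^2 - beta * (norm a1)^2 - beta * (norm (g - a1))^2 - 2 * (Hy \<bullet> a1) + 2 * nu * (norm a1)^2 - 2 * (X1 \<bullet> a1)"
    unfolding polar2 by (simp add: algebra_simps power2_norm_eq_inner)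
  finally show ?thesis by (simp only: distrib_left right_diff_distrib)
qed

lemma qpolar:
  fixes W :: "'a::real_inner \<Rightarrow> 'a"
  assumes lin: "linear W" and sym: "\<And>u v. W u \<bullet> v = u \<bullet> W v"
  shows "2 * (W (u - v) \<bullet> u) = W u \<bullet> u - W v \<bullet> v + W (u - v) \<bullet> (u - v)"
proof -
  have "W v \<bullet> u = W u \<bullet> v" using sym[of v u] by (simp add: inner_commute)
  then show ?thesis using lin by (simp add: linear_diff inner_diff_left inner_diff_right)
qed

lemma zblock:
  fixes W :: "'a::real_inner \<Rightarrow> 'a" and p p1 pg Hz :: 'a and lam gamma :: real
  assumes lin: "linear W" and sym: "\<And>u v. W u \<bullet> v = u \<bullet> W v" and lam: "0 < lam"
    and step: "W p1 - W p = (lam*gamma) *\<^sub>R (W pg - W p1) - lam *\<^sub>R W Hz"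
  shows "(1/lam) * (W p1 \<bullet> p1) - (1/lam) * (W p \<bullet> p) + (1/lam) * (W (p1 - p) \<bullet> (p1 - p))
     = gamma * (W pg \<bullet> pg) - gamma * (W p1 \<bullet> p1) - gamma * (W (pg - p1) \<bullet> (pg - p1)) - 2 * (Hz \<bullet> W p1)"
proof -
  have s: "(1/lam) *\<^sub>R W (p1 - p) = gamma *\<^sub>R W (pg - p1) - W Hz"
    using lam lin unfolding linear_diff[OF lin] step by (simp add: algebra_simps)
  have "(1/lam) * ((W p1 \<bullet> p1) - (W p \<bullet> p) + (W (p1 - p) \<bullet> (p1 - p)))
      = (1/lam) * (2 * (W (p1 - p) \<bullet> p1))"
    using qpolar[OF lin sym, of p1 p] by simp
  also have "\<dots> = 2 * (((1/lam) *\<^sub>R W (p1 - p)) \<bullet> p1)" by simp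
  also have "\<dots> = gamma * (2 * (W (pg - p1) \<bullet> p1)) - 2 * (W Hz \<bullet> p1)"
    unfolding s by (simp add: inner_simps algebra_simps)
  also have "2 * (W (pg - p1) \<bullet> p1) = W pg \<bullet> pg - W p1 \<bullet> p1 - W (pg - p1) \<bullet> (pg - p1)"
  proof -
    have h1: "2 * (W (pg - p1) \<bullet> pg) = W pg \<bullet> pg - W p1 \<bullet> p1 + W (pg - p1) \<bullet> (pg - p1)"
      by (rule qpolar[OF lin sym])
    have h2: "W (pg - p1) \<bullet> p1 = W (pg - p1) \<bullet> pg - W (pg - p1) \<bullet> (pg - p1)"
      by (simp add: inner_diff_right)
    show ?thesis using h1 h2 by linarith
  qed
  also have "W Hz \<bullet> p1 = Hz \<bullet> W p1" by (rule sym)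
  finally show ?thesis by (simp only: distrib_left right_diff_distrib)
qed

lemma hscalar:
  fixes N1 N0 Nd Ng Nfg M1 M0 Md Mg Mfg s mu nu :: real
  assumes "s \<noteq> 0" "mu \<noteq> 0"
  shows "(2/mu) * (- (1/s) * N1 + ((1-s)/s) * N0 + (1/s) * Nd - Ng - ((1-s)/s) * Nfg)
       + nu * (- (1/s) * M1 + ((1-s)/s) * M0 + (1/s) * Md - Mg - ((1-s)/s) * Mfg)
   = - ((2/s) * (1/mu * N1 + nu/2 * M1)) + (2*(1-s)/s) * (1/mu * N0 + nu/2 * M0) + (2/s) * (1/mu * Nd + nu/2 * Md)
     - 2 * (1/mu * Ng + nu/2 * Mg) - (2*(1-s)/s) * (1/mu * Nfg + nu/2 * Mfg)"
  using assms by (simp add: field_simps)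

lemma hblock:
  fixes a af a1 c cf c1 g hz af1 cf1 :: "'a::real_inner" and s mu nu :: real
  assumes s: "0 < s" and mu: "0 < mu"
  assumes hg: "g = s *\<^sub>R a + (1 - s) *\<^sub>R af"
    and hhz: "hz = s *\<^sub>R c + (1 - s) *\<^sub>R cf"
    and haf1: "af1 = g + s *\<^sub>R (a1 - a)"
    and hcf1: "cf1 = hz + s *\<^sub>R (c1 - c)"
  shows "- 2 * (((2/mu) *\<^sub>R (g + hz) + nu *\<^sub>R g) \<bullet> a1) - 2 * (((2/mu) *\<^sub>R (g + hz)) \<bullet> c1)
    = - ((2/s) * Qh mu nu af1 cf1) + (2*(1-s)/s) * Qh mu nu af cf + (2/s) * Qh mu nu (af1 - g) (cf1 - hz)
      - 2 * Qh mu nu g hz - (2*(1-s)/s) * Qh mu nu (af - g) (cf - hz)"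
proof -
  have A1: "- 2 * ((g + hz) \<bullet> (a1 + c1)) = - (1/s) * (norm (af1 + cf1))^2 + ((1-s)/s) * (norm (af + cf))^2 + (1/s) * (norm ((af1 + cf1) - (g + hz)))^2
          - (norm (g + hz))^2 - ((1-s)/s) * (norm ((af + cf) - (g + hz)))^2"
  proof -
    have eq1: "g + hz = s *\<^sub>R (a + c) + (1 - s) *\<^sub>R (af + cf)" unfolding hg hhz by (simp add: algebra_simps)
    have eq2: "af1 + cf1 = (g + hz) + s *\<^sub>R ((a1 + c1) - (a + c))" unfolding haf1 hcf1 by (simp add: algebra_simps)
    have inst: "- 2 * ((s *\<^sub>R (a + c) + (1 - s) *\<^sub>R (af + cf)) \<bullet> (a1 + c1)) =
      - (1/s) * (norm ((s *\<^sub>R (a + c) + (1 - s) *\<^sub>R (af + cf)) + s *\<^sub>R ((a1 + c1) - (a + c))))^2 + ((1-s)/s) * (norm (af + cf))^2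
      + (1/s) * (norm (((s *\<^sub>R (a + c) + (1 - s) *\<^sub>R (af + cf)) + s *\<^sub>R ((a1 + c1) - (a + c))) - (s *\<^sub>R (a + c) + (1 - s) *\<^sub>R (af + cf))))^2
      - (norm (s *\<^sub>R (a + c) + (1 - s) *\<^sub>R (af + cf)))^2 - ((1-s)/s) * (norm ((af + cf) - (s *\<^sub>R (a + c) + (1 - s) *\<^sub>R (af + cf))))^2"
      by (rule accel_id[OF s])
    show ?thesis using inst unfolding eq1[symmetric] eq2[symmetric] .
  qed
  have A2: "- 2 * (g \<bullet> a1) = - (1/s) * (norm af1)^2 + ((1-s)/s) * (norm af)^2 + (1/s) * (norm (af1 - g))^2
          - (norm g)^2 - ((1-s)/s) * (norm (af - g))^2"
    unfolding haf1 hg by (rule accel_id[OF s])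
  have e1: "(af1 + cf1) - (g + hz) = (af1 - g) + (cf1 - hz)" by simp
  have e2: "(af + cf) - (g + hz) = (af - g) + (cf - hz)" by simp
  have L: "- 2 * (((2/mu) *\<^sub>R (g + hz) + nu *\<^sub>R g) \<bullet> a1) - 2 * (((2/mu) *\<^sub>R (g + hz)) \<bullet> c1)
      = (2/mu) * (- 2 * ((g + hz) \<bullet> (a1 + c1))) + nu * (- 2 * (g \<bullet> a1))"
    by (simp add: inner_simps algebra_simps)
  show ?thesis unfolding L A1 A2 Qh_def e1 e2
    by (rule hscalar) (use s mu in auto)
qed

lemma sq_add: "(norm (d + e))^2 \<le> 2 * (norm d)^2 + 2 * (norm e)^2" for d e :: "'a::real_normed_vector"
proof -
  have "norm (d + e) \<le> norm d + norm e" by (rule norm_triangle_ineq)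
  hence "(norm (d + e))^2 \<le> (norm d + norm e)^2" by (simp add: power_mono)
  also have "\<dots> \<le> 2 * (norm d)^2 + 2 * (norm e)^2"
    using sum_squares_ge_zero[of "norm d - norm e" 0] by (simp add: power2_eq_square algebra_simps)
  finally show ?thesis .
qed

lemma sq_add3: "(norm (u + v + w))^2 \<le> 3 * ((norm u)^2 + (norm v)^2 + (norm w)^2)" for u v w :: "'a::real_normed_vector"
proof -
  have "norm (u + v + w) \<le> norm (u + v) + norm w" by (rule norm_triangle_ineq)
  also have "\<dots> \<le> norm u + norm v + norm w" using norm_triangle_ineq[of u v] by simp
  finally have "norm (u + v + w) \<le> norm u + norm v + norm w" .
  hence "(norm (u + v + w))^2 \<le> (norm u + norm v + norm w)^2" by (simp add: power_mono)
  also have "\<dots> \<le> 3 * ((norm u)^2 + (norm v)^2 + (norm w)^2)"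
    using sum_squares_ge_zero[of "norm u - norm v" "norm v - norm w"] sum_squares_ge_zero[of "norm u - norm w" 0]
    by (simp add: power2_eq_square algebra_simps)
  finally show ?thesis .
qed

lemma hb1:
  fixes d e :: "'a::real_inner" and sg mu nu th lam lmax Q :: real
  assumes sgp: "0 < sg" and mu: "0 < mu" and nu: "0 \<le> nu" and lam: "0 < lam" and lmax: "0 < lmax"
    and c1: "4* sg/mu + sg*nu \<le> 1/th" and c2: "4* sg/mu \<le> 1/(lam*lmax)"
    and eQ: "(norm e)^2 \<le> lmax * Q"
  shows "(2/sg) * Qh mu nu (sg *\<^sub>R d) (sg *\<^sub>R e) \<le> (1/th) * (norm d)^2 + (1/lam) * Q"
proof -
  have "(2/sg) * Qh mu nu (sg *\<^sub>R d) (sg *\<^sub>R e) = (2* sg/mu) * (norm (d + e))^2 + (sg*nu) * (norm d)^2"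
  proof -
    have n1: "norm (sg *\<^sub>R d + sg *\<^sub>R e) = sg * norm (d + e)"
      using sgp by (metis scaleR_add_right norm_scaleR abs_of_pos)
    have n2: "norm (sg *\<^sub>R d) = sg * norm d" using sgp by simp
    show ?thesis unfolding Qh_def n1 n2 using sgp mu by (simp add: field_simps power2_eq_square)
  qed
  also have "\<dots> \<le> (2* sg/mu) * (2 * (norm d)^2 + 2 * (norm e)^2) + (sg*nu) * (norm d)^2"
    using sgp mu nu sq_add[of d e] by (intro add_mono mult_left_mono) auto
  also have "\<dots> = (4* sg/mu + sg*nu) * (norm d)^2 + (4* sg/mu) * (norm e)^2" by (simp add: algebra_simps)
  also have "\<dots> \<le> (1/th) * (norm d)^2 + (1/(lam*lmax)) * (norm e)^2"
    using c1 c2 by (intro add_mono mult_right_mono) auto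
  also have "(1/(lam*lmax)) * (norm e)^2 \<le> (1/(lam*lmax)) * (lmax * Q)"
    using eQ lam lmax by (intro mult_left_mono) auto
  also have "(1/(lam*lmax)) * (lmax * Q) = (1/lam) * Q" using lmax by simp
  finally show ?thesis by simp
qed

lemma hb2:
  fixes g hz :: "'a::real_inner" and beta nu mu gamma lmin qg :: real
  assumes b: "0 \<le> beta" "beta \<le> 1/mu" "3*beta \<le> nu" and mu: "0 < mu"
    and ga: "gamma = beta * lmin" and q: "lmin * qg \<le> (norm hz)^2"
  shows "beta * (norm g)^2 + gamma * qg \<le> 2 * Qh mu nu g hz"
proof -
  have "gamma * qg \<le> beta * (norm hz)^2" unfolding ga using q b by (simp add: mult.assoc mult_left_mono)
  also have "(norm hz)^2 \<le> 2 * (norm (g + hz))^2 + 2 * (norm g)^2"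
    using sq_add[of "g + hz" "- g"] by simp
  finally have "gamma * qg \<le> beta * (2 * (norm (g + hz))^2 + 2 * (norm g)^2)" using b by (simp add: mult_left_mono)
  moreover have "beta * (2 * (norm (g + hz))^2) \<le> (2/mu) * (norm (g + hz))^2"
  proof -
    have "(2*beta) * (norm (g + hz))^2 \<le> (2/mu) * (norm (g + hz))^2"
      using b by (intro mult_right_mono) auto
    then show ?thesis by simp
  qed
  moreover have "3 * beta * (norm g)^2 \<le> nu * (norm g)^2" using b by (intro mult_right_mono) auto
  ultimately show ?thesis unfolding Qh_def by (simp add: algebra_simps)
qed

lemma yb:
  fixes a1 u v w :: "'a::real_inner" and c0 p q A B C :: real
  assumes a1: "a1 = p *\<^sub>R u + q *\<^sub>R v + w" and c0: "0 \<le> c0"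
    and hA: "3*c0*p^2 \<le> A" and hB: "3*c0*q^2 \<le> B" and hC: "3*c0 \<le> C"
  shows "c0 * (norm a1)^2 \<le> A * (norm u)^2 + B * (norm v)^2 + C * (norm w)^2"
proof -
  have "(norm a1)^2 \<le> 3 * ((norm (p *\<^sub>R u))^2 + (norm (q *\<^sub>R v))^2 + (norm w)^2)"
    unfolding a1 by (rule sq_add3)
  hence "c0 * (norm a1)^2 \<le> c0 * (3 * ((norm (p *\<^sub>R u))^2 + (norm (q *\<^sub>R v))^2 + (norm w)^2))"
    using c0 by (rule mult_left_mono)
  also have "\<dots> = (3*c0*p^2) * (norm u)^2 + (3*c0*q^2) * (norm v)^2 + (3*c0) * (norm w)^2"
    by (simp add: power_mult_distrib algebra_simps)
  also have "\<dots> \<le> A * (norm u)^2 + B * (norm v)^2 + C * (norm w)^2"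
    using hA hB hC by (intro add_mono mult_right_mono) auto
  finally show ?thesis .
qed

lemma bregman_h:
  fixes u v u0 v0 :: "'a::real_inner" and mu nu :: real
  assumes mu: "mu \<noteq> 0"
  shows "bregman (\<lambda>(u, v). 1 / mu * (norm (u + v))\<^sup>2 + nu / 2 * (norm u)\<^sup>2)
                    (\<lambda>(u, v). ((2 / mu) *\<^sub>R (u + v) + nu *\<^sub>R u, (2 / mu) *\<^sub>R (u + v))) (u, v) (u0, v0)
       = Qh mu nu (u - u0) (v - v0)"
  unfolding bregman_def Qh_def power2_norm_eq_inner using mu
  by (simp add: inner_simps inner_commute field_simps)

lemma rfacts:
  fixes F :: "'a::real_inner \<Rightarrow> real" and g :: "'a \<Rightarrow> 'a"
  assumes der: "\<And>u. (F has_derivative (\<lambda>h. g u \<bullet> h)) (at u)"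
    and sc: "strongly_convex mu F" and lip: "lipschitz_gradient L g" and mu: "0 < mu" "mu \<le> L"
  defines "r \<equiv> \<lambda>u. F u - mu / 4 * (norm u)\<^sup>2"
  defines "dr \<equiv> \<lambda>u. g u - (mu / 2) *\<^sub>R u"
  shows "mu/4 * (norm (u - v))^2 \<le> bregman r dr u v"
    and "bregman r dr u v \<le> L/2 * (norm (u - v))^2"
    and "1/(2*L) * (norm (dr u - dr v))^2 \<le> bregman r dr u v"
proof -
  have eq: "bregman r dr u v = (F u - F v - g v \<bullet> (u - v)) - mu/4 * (norm (u - v))^2" for u v
    unfolding bregman_def r_def dr_def power2_norm_eq_inner
    by (simp add: inner_simps inner_commute algebra_simps)
  have D1: "mu/4 * (norm (u - v))^2 \<le> bregman r dr u v" for u v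
    using sc_first_order[OF der sc, of v u] unfolding eq by simp
  have D2: "bregman r dr u v \<le> L/2 * (norm (u - v))^2" for u v
  proof -
    have "F u - F v - g v \<bullet> (u - v) \<le> L/2 * (norm (u - v))^2" using descent[OF der lip, of u v] by simp
    moreover have "0 \<le> mu/4 * (norm (u - v))^2" using mu by simp
    ultimately show ?thesis unfolding eq by simp
  qed
  show "mu/4 * (norm (u - v))^2 \<le> bregman r dr u v" by (rule D1)
  show "bregman r dr u v \<le> L/2 * (norm (u - v))^2" by (rule D2)
  define G where "G = dr u - dr v"
  define w where "w = u - (1/L) *\<^sub>R G"
  have L: "0 < L" using mu by simp
  have a: "0 \<le> bregman r dr w v"
  proof -
    have "0 \<le> mu/4 * (norm (w - v))^2" using mu by simp
    then show ?thesis using D1[of w v] by linarith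
  qed
  have b: "bregman r dr w u \<le> L/2 * (norm (w - u))^2" by (rule D2)
  have nw: "L/2 * (norm (w - u))^2 = 1/(2*L) * (norm G)^2"
    unfolding w_def using L by (simp add: power_mult_distrib power2_eq_square field_simps)
  have c: "dr u \<bullet> (w - u) - dr v \<bullet> (w - v) = - (dr v \<bullet> (u - v)) - (1/L) * (G \<bullet> G)"
    unfolding w_def G_def by (simp add: inner_simps algebra_simps)
  have "1/(2*L) * (norm G)^2 = (1/L) * (G \<bullet> G) - 1/(2*L) * (norm G)^2"
    using L by (simp add: power2_norm_eq_inner field_simps)
  then show "1/(2*L) * (norm (dr u - dr v))^2 \<le> bregman r dr u v"
    using a b nw c unfolding bregman_def G_def[symmetric] by linarith
qed

lemma W_S2:
  fixes W :: "real^'d^'n \<Rightarrow> real^'d^'n"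
  assumes lin: "linear W" and sym: "\<And>u v. W u \<bullet> v = u \<bullet> W v" and psd: "\<And>u. 0 \<le> W u \<bullet> u"
    and nz: "W w \<noteq> 0"
  shows "(norm (W u))^2 \<le> lambda_max W * (W u \<bullet> u)"
proof -
  note sp = spectral[OF lin sym psd nz]
  have lpos: "0 < lambda_max W" using sp(3) sp(4) by linarith
  define N where "N = W u \<bullet> W u"
  define K where "K = lambda_max W * (W u \<bullet> u)"
  have cs: "(W u \<bullet> W u)^2 \<le> (W u \<bullet> u) * (W (W u) \<bullet> W u)"
    by (rule semi_cs[OF lin sym subspace_UNIV psd]) auto
  have b: "W (W u) \<bullet> W u \<le> lambda_max W * (W u \<bullet> W u)"
    using sp(1)[of "W u"] by (simp add: power2_norm_eq_inner)
  have "N * N \<le> (W u \<bullet> u) * (lambda_max W * N)"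
  proof -
    have "N * N = (W u \<bullet> W u)^2" unfolding N_def by (simp add: power2_eq_square)
    also have "\<dots> \<le> (W u \<bullet> u) * (W (W u) \<bullet> W u)" by (rule cs)
    also have "\<dots> \<le> (W u \<bullet> u) * (lambda_max W * N)"
      unfolding N_def by (rule mult_left_mono[OF b psd])
    finally show ?thesis .
  qed
  hence NN: "N * N \<le> K * N" unfolding K_def by (simp add: algebra_simps)
  have K0: "0 \<le> K" unfolding K_def using lpos psd[of u] by simp
  have "N \<le> K"
  proof (cases "N = 0")
    case True then show ?thesis using K0 by simp
  next
    case False
    hence "0 < N" unfolding N_def by simp
    then show ?thesis using NN by (simp add: mult_le_cancel_right)
  qed
  then show ?thesis unfolding N_def K_def by (simp add: power2_norm_eq_inner)
qed

lemma W_S3: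
  fixes W :: "real^'d^'n \<Rightarrow> real^'d^'n"
  assumes lin: "linear W" and sym: "\<And>u v. W u \<bullet> v = u \<bullet> W v" and psd: "\<And>u. 0 \<le> W u \<bullet> u"
    and nz: "W w \<noteq> 0" and u: "u \<in> range W"
  shows "lambda_min_pos W * (W u \<bullet> u) \<le> (norm (W u))^2"
proof -
  note sp = spectral[OF lin sym psd nz]
  define P where "P = W u \<bullet> u"
  define l where "l = lambda_min_pos W"
  have l0: "0 < l" unfolding l_def by (rule sp(3))
  have h1: "l * (norm u)^2 \<le> P" unfolding l_def P_def by (rule sp(2)[OF u])
  have cs: "P^2 \<le> (norm (W u))^2 * (norm u)^2"
  proof -
    have "\<bar>P\<bar> \<le> norm (W u) * norm u" unfolding P_def by (rule Cauchy_Schwarz_ineq2)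
    hence "\<bar>P\<bar>^2 \<le> (norm (W u) * norm u)^2" by (rule power_mono) simp
    then show ?thesis by (simp add: power_mult_distrib)
  qed
  have P0: "0 \<le> P" unfolding P_def by (rule psd)
  show ?thesis
  proof (cases "P = 0")
    case True then show ?thesis unfolding P_def by simp
  next
    case False
    hence Pp: "0 < P" using P0 by simp
    have "l * P * P \<le> l * ((norm (W u))^2 * (norm u)^2)"
      using cs l0 by (simp add: power2_eq_square mult.assoc)
    also have "\<dots> = (norm (W u))^2 * (l * (norm u)^2)" by (simp add: algebra_simps)
    also have "\<dots> \<le> (norm (W u))^2 * P" using h1 by (intro mult_left_mono) auto
    finally have "(l * P) * P \<le> (norm (W u))^2 * P" .
    then show ?thesis using Pp unfolding P_def[symmetric] l_def[symmetric] by (simp add: mult_le_cancel_right)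
  qed
qed

lemma ker_perp:
  fixes W :: "real^'d^'n \<Rightarrow> real^'d^'n"
  assumes lin: "linear W" and sym: "\<And>u v. W u \<bullet> v = u \<bullet> W v"
  shows "{u. W u = 0} = (range W)\<^sup>\<bottom>"
proof -
  have "adjoint W = W" by (rule adjoint_unique) (use sym in auto)
  then show ?thesis using ker_orthogonal_comp_adjoint[OF lin] by (simp add: vimage_def)
qed

lemma Wdag_prop:
  fixes W :: "real^'d^'n \<Rightarrow> real^'d^'n"
  assumes lin: "linear W" and sym: "\<And>u v. W u \<bullet> v = u \<bullet> W v" and v: "v \<in> range W"
  shows "Wdag W v \<in> range W \<and> W (Wdag W v) = v"
proof -
  have sub: "subspace (range W)" using lin by (simp add: linear_subspace_image)
  obtain u0 where u0: "v = W u0" using v by auto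
  have "u0 \<in> range W + (range W)\<^sup>\<bottom>" using subspace_sum_orthogonal_comp[OF sub] by simp
  then obtain r k where rk: "r \<in> range W" "k \<in> (range W)\<^sup>\<bottom>" "u0 = r + k" by (meson set_plus_elim)
  have "W k = 0" using rk(2) ker_perp[OF lin sym] by blast
  hence ex: "r \<in> range W \<and> W r = v" using rk u0 lin by (simp add: linear_add)
  have uniq: "x = r" if "x \<in> range W \<and> W x = v" for x
  proof -
    have "x - r \<in> range W" using that rk(1) sub by (simp add: subspace_diff)
    moreover have "W (x - r) = 0" using that ex lin by (simp add: linear_diff)
    ultimately have "x - r = 0" by (rule range_ker_zero[OF sym])
    then show ?thesis by simp
  qed
  have "(THE x. x \<in> range W \<and> W x = v) = r" using ex uniq by (rule the_equality)
  then show ?thesis unfolding Wdag_def using ex by simp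
qed

lemma perp_range:
  fixes W :: "real^'d^'n \<Rightarrow> real^'d^'n"
  assumes lin: "linear W" and sym: "\<And>u v. W u \<bullet> v = u \<bullet> W v"
    and g: "\<And>c. W c = 0 \<Longrightarrow> c \<bullet> g = 0"
  shows "g \<in> range W"
proof -
  have sub: "subspace (range W)" using lin by (simp add: linear_subspace_image)
  have "g \<in> {u. W u = 0}\<^sup>\<bottom>" using g unfolding orthogonal_comp_def orthogonal_def by auto
  hence "g \<in> (range W)\<^sup>\<bottom>\<^sup>\<bottom>" unfolding ker_perp[OF lin sym] .
  then show ?thesis using orthogonal_comp_self[OF sub] by simp
qed

lemma params_abs:
  fixes a b p q :: real
  assumes a: "0 < a" "a \<le> b" and p: "0 < p" "p \<le> q"
  defines "tau \<equiv> a/(2*b)" and "eta \<equiv> 1/(2*(a*b))" and "alpha \<equiv> a^2/2"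
    and "sgm \<equiv> a*p/(18*(b*q))" and "nu \<equiv> 3/(80*b^2)" and "beta \<equiv> 1/(80*b^2)"
    and "theta \<equiv> 18*(a*b*q)/(5*p)" and "gamma \<equiv> p^2/(80*b^2)" and "lam \<equiv> 9*(a*b)/(2*(p*q))"
  shows "0 < tau" "tau < 1" "0 < eta" "0 < alpha" "0 < sgm" "0 < nu" "0 < beta" "0 < theta" "0 < gamma" "0 < lam"
    and "2 * tau * b^2 / (2 - tau) \<le> 1 / (2 * eta)"
    and "sgm \<le> eta * alpha"
    and "sgm \<le> lam * gamma"
    and "2 * sgm \<le> tau"
    and "4 * sgm / a^2 + sgm * nu \<le> 1 / theta"
    and "4 * sgm / a^2 \<le> 1 / (lam * q^2)"
    and "beta \<le> 1 / a^2" "3 * beta \<le> nu" "gamma = beta * p^2"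
    and "3 * (sgm / theta + 2 * nu - beta) * (1/eta)^2 \<le> 1 / (2 * eta)"
    and "3 * (sgm / theta + 2 * nu - beta) * (- alpha)^2 \<le> alpha"
    and "3 * (sgm / theta + 2 * nu - beta) \<le> 1 / (2 * b^2)"
    and "0 \<le> sgm / theta + 2 * nu - beta"
proof -
  have b: "0 < b" using a by simp
  have q: "0 < q" using p by simp
  show tp: "0 < tau" unfolding tau_def using a b by simp
  have tle: "tau \<le> 1/2" unfolding tau_def using a b by (simp add: field_simps)
  then show "tau < 1" by simp
  show ep: "0 < eta" unfolding eta_def using a b by simp
  show ap: "0 < alpha" unfolding alpha_def using a by simp
  show sp: "0 < sgm" unfolding sgm_def using a b p q by simp
  show np: "0 < nu" unfolding nu_def using b by simp
  show bp: "0 < beta" unfolding beta_def using b by simp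
  show thp: "0 < theta" unfolding theta_def using a b p q by simp
  show gp: "0 < gamma" unfolding gamma_def using b p by simp
  show lp: "0 < lam" unfolding lam_def using a b p q by simp
  have ab: "a * b \<le> b * b" using a b by (intro mult_right_mono) auto
  have aa: "a * a \<le> b * b" using a b by (intro mult_mono) auto
  have pq: "p * q \<le> q * q" using p q by (intro mult_right_mono) auto
  define R where "R = a / b"
  define T where "T = p / q"
  have r1: "R \<le> 1" "0 < R" unfolding R_def using a b by auto
  have t1: "T \<le> 1" "0 < T" unfolding T_def using p q by auto
  have RT: "R * T \<le> R" using r1 t1 by (simp add: mult_left_le)
  have RTp: "0 < R * T" using r1 t1 by simp
  have sig_eq: "sgm = R * T / 18" unfolding sgm_def R_def T_def by simp
  have tau_eq: "tau = R / 2" unfolding tau_def R_def by simp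
  show "2 * tau * b^2 / (2 - tau) \<le> 1 / (2 * eta)"
  proof -
    have e1: "1 / (2 * eta) = a * b" unfolding eta_def by simp
    have e2: "2 * tau * b^2 = a * b" unfolding tau_def using b by (simp add: power2_eq_square)
    have "1 \<le> 2 - tau" using tle by simp
    then show ?thesis unfolding e1 e2 using a b by (simp add: divide_le_eq)
  qed
  show "sgm \<le> eta * alpha"
  proof -
    have "eta * alpha = R / 4" unfolding eta_def alpha_def R_def using a b by (simp add: power2_eq_square)
    then show ?thesis unfolding sig_eq using RT r1 by linarith
  qed
  show "sgm \<le> lam * gamma"
  proof -
    have "lam * gamma = R * T * (9/160)" unfolding lam_def gamma_def R_def T_def using a b p q by (simp add: power2_eq_square field_simps)
    then show ?thesis unfolding sig_eq using RTp by linarith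
  qed
  show "2 * sgm \<le> tau"
  proof -
    show ?thesis unfolding sig_eq tau_eq using RT r1 by linarith
  qed
  have X: "sgm / a^2 = p / (18 * (a*b*q))" unfolding sgm_def using a b q by (simp add: power2_eq_square field_simps)
  have th1: "1 / theta = 5 * (p / (18 * (a*b*q)))" unfolding theta_def using a b p q by (simp add: field_simps)
  have Xp: "0 < p / (18 * (a*b*q))" using a b p q by simp
  show "4 * sgm / a^2 + sgm * nu \<le> 1 / theta"
  proof -
    have sn: "sgm * nu = (18*(a*a)) / (480 * (b*b)) * (p / (18 * (a*b*q)))"
      unfolding sgm_def nu_def using a b p q by (simp add: power2_eq_square field_simps)
    have bb: "0 \<le> b * b" by simp
    have "(18*(a*a)) / (480 * (b*b)) \<le> 1" using aa b bb by (simp add: divide_le_eq) (use aa bb in linarith)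
    hence "(18*(a*a)) / (480 * (b*b)) * (p / (18 * (a*b*q))) \<le> 1 * (p / (18 * (a*b*q)))"
      using Xp by (intro mult_right_mono) auto
    moreover have "4 * sgm / a^2 = 4 * (p / (18 * (a*b*q)))" using X by simp
    ultimately show ?thesis unfolding th1 sn by simp
  qed
  show "4 * sgm / a^2 \<le> 1 / (lam * q^2)"
  proof -
    have "1 / (lam * q^2) = 4 * (p / (18 * (a*b*q)))" unfolding lam_def using a b p q by (simp add: power2_eq_square field_simps)
    moreover have "4 * sgm / a^2 = 4 * (p / (18 * (a*b*q)))" using X by simp
    ultimately show ?thesis by simp
  qed
  show "beta \<le> 1 / a^2" unfolding beta_def
  proof (rule divide_left_mono)
    have "0 \<le> b * b" by simp
    then have "a * a \<le> 80 * (b * b)" using aa by linarith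
    then show "a^2 \<le> 80 * b^2" by (simp add: power2_eq_square)
  qed (use a b in auto)
  show "3 * beta \<le> nu" unfolding beta_def nu_def by simp
  show "gamma = beta * p^2" unfolding beta_def gamma_def by simp
  define c0 where "c0 = sgm / theta + 2 * nu - beta"
  have c0_eq: "c0 = (T^2 * (5/324) + 1/16) / b^2"
    unfolding c0_def sgm_def theta_def nu_def beta_def T_def using a b p q by (simp add: power2_eq_square field_simps)
  have tt: "T^2 \<le> 1" using t1 by (simp add: power_le_one)
  have c0b: "c0 \<le> (5/324 + 1/16) / b^2"
  proof -
    have "T^2 * (5/324) + 1/16 \<le> 5/324 + 1/16" using tt by simp
    then show ?thesis unfolding c0_eq using b by (intro divide_right_mono) auto
  qed
  have c0p: "0 \<le> c0" unfolding c0_eq by simp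
  show "0 \<le> sgm / theta + 2 * nu - beta" using c0p c0_def by simp
  show "3 * (sgm / theta + 2 * nu - beta) \<le> 1 / (2 * b^2)"
    using c0b b unfolding c0_def[symmetric] by (simp add: field_simps)
  define K where "K = (5/324 + 1/16) / b^2"
  have aab: "a * a \<le> a * b" using a by (intro mult_left_mono) auto
  have aa0: "0 \<le> a * a" by simp
  show "3 * (sgm / theta + 2 * nu - beta) * (1/eta)^2 \<le> 1 / (2 * eta)"
  proof -
    have "3 * c0 * (1/eta)^2 \<le> 3 * K * (1/eta)^2" using c0b unfolding K_def by (intro mult_right_mono) auto
    also have "\<dots> = (5/108 + 3/16) * (4 * (a*a))" unfolding eta_def K_def using b by (simp add: power2_eq_square field_simps)
    also have "\<dots> = (101/108) * (a*a)" by simp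
    also have "\<dots> \<le> a * b" using aab aa0 by linarith
    also have "\<dots> = (1/4) * (4 * (a*b))" by simp
    also have "\<dots> = 1 / (2 * eta)" unfolding eta_def by simp
    finally show ?thesis unfolding c0_def .
  qed
  show "3 * (sgm / theta + 2 * nu - beta) * (- alpha)^2 \<le> alpha"
  proof -
    have "3 * c0 * (- alpha)^2 \<le> 3 * K * (- alpha)^2" using c0b unfolding K_def by (intro mult_right_mono) auto
    also have "\<dots> = ((5/108 + 3/16) * ((a*a) / (b*b)) / 2) * alpha" unfolding alpha_def K_def using b by (simp add: power2_eq_square field_simps)
    also have "\<dots> \<le> 1 * alpha"
    proof (rule mult_right_mono)
      have "(a*a) / (b*b) \<le> 1" using aa b by simp
      moreover have "0 \<le> (a*a) / (b*b)" by simp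
      ultimately have "(101/432) * ((a*a) / (b*b)) \<le> 1" by linarith
      then show "(5/108 + 3/16) * ((a*a) / (b*b)) / 2 \<le> 1" by simp
    qed (use ap in simp)
    finally show ?thesis unfolding c0_def by simp
  qed
qed


lemma Qh_nonneg: "0 < mu \<Longrightarrow> 0 \<le> nu \<Longrightarrow> 0 \<le> Qh mu nu u v"
  unfolding Qh_def by simp

lemma step_solve:
  fixes x A B D :: "'a::real_vector" and c :: real
  assumes "x = A + c *\<^sub>R (B - x) - D"
  shows "(1 + c) *\<^sub>R x = A + c *\<^sub>R B - D"
proof -
  have "x - (A + c *\<^sub>R (B - x) - D) = 0" by (rule right_minus_eq[THEN iffD2, OF assms])
  moreover have "(1 + c) *\<^sub>R x - (A + c *\<^sub>R B - D) = x - (A + c *\<^sub>R (B - x) - D)"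
    by (simp add: algebra_simps)
  ultimately show ?thesis by simp
qed

lemma ystep:
  fixes y y1 yg zg x1 ys zs xs g hz :: "'a::real_vector" and th be mu nu :: real
  assumes step: "y1 = y + (th*be) *\<^sub>R (yg - y1) - th *\<^sub>R ((2/mu) *\<^sub>R (yg + zg) + nu *\<^sub>R yg) + (th*nu) *\<^sub>R y1 - th *\<^sub>R x1"
    and hyg: "yg = g + ys" and hzg: "zg = hz + zs" and yz: "(2/mu) *\<^sub>R (ys + zs) = - xs"
  shows "(y1 - ys) - (y - ys) = (th*be) *\<^sub>R (g - (y1 - ys)) - th *\<^sub>R ((2/mu) *\<^sub>R (g + hz) + nu *\<^sub>R g) + (th*nu) *\<^sub>R (y1 - ys) - th *\<^sub>R (x1 - xs)"
proof -
  have e: "(2/mu) *\<^sub>R (yg + zg) = (2/mu) *\<^sub>R (g + hz) - xs"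
  proof -
    have "yg + zg = (g + hz) + (ys + zs)" unfolding hyg hzg by (simp add: algebra_simps)
    then have "(2/mu) *\<^sub>R (yg + zg) = (2/mu) *\<^sub>R (g + hz) + (2/mu) *\<^sub>R (ys + zs)" by (simp add: scaleR_add_right)
    then show ?thesis unfolding yz by simp
  qed
  have z: "y1 - (y + (th*be) *\<^sub>R (yg - y1) - th *\<^sub>R ((2/mu) *\<^sub>R (yg + zg) + nu *\<^sub>R yg) + (th*nu) *\<^sub>R y1 - th *\<^sub>R x1) = 0"
    by (rule right_minus_eq[THEN iffD2, OF step])
  have "((y1 - ys) - (y - ys)) - ((th*be) *\<^sub>R (g - (y1 - ys)) - th *\<^sub>R ((2/mu) *\<^sub>R (g + hz) + nu *\<^sub>R g) + (th*nu) *\<^sub>R (y1 - ys) - th *\<^sub>R (x1 - xs))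
     = y1 - (y + (th*be) *\<^sub>R (yg - y1) - th *\<^sub>R ((2/mu) *\<^sub>R (yg + zg) + nu *\<^sub>R yg) + (th*nu) *\<^sub>R y1 - th *\<^sub>R x1)"
    unfolding e unfolding hyg by (simp add: algebra_simps)
  then show ?thesis using z by simp
qed

lemma zstep:
  fixes W :: "'a::real_vector \<Rightarrow> 'a" and z z1 zg yg zs xs p p1 pg Hz :: 'a and la ga mu :: real
  assumes step: "z1 = z + (la*ga) *\<^sub>R (zg - z1) - la *\<^sub>R W ((2/mu) *\<^sub>R (yg + zg))"
    and lin: "linear W" and hp: "W p = z - zs" and hp1: "W p1 = z1 - zs" and hpg: "W pg = zg - zs"
    and e: "(2/mu) *\<^sub>R (yg + zg) = Hz - xs" and wx: "W xs = 0"
  shows "W p1 - W p = (la*ga) *\<^sub>R (W pg - W p1) - la *\<^sub>R W Hz"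
proof -
  have "W ((2/mu) *\<^sub>R (yg + zg)) = W Hz" unfolding e using lin wx by (simp add: linear_diff)
  then have s: "z1 = z + (la*ga) *\<^sub>R (zg - z1) - la *\<^sub>R W Hz" using step by simp
  have z: "z1 - (z + (la*ga) *\<^sub>R (zg - z1) - la *\<^sub>R W Hz) = 0" by (rule right_minus_eq[THEN iffD2, OF s])
  have "(W p1 - W p) - ((la*ga) *\<^sub>R (W pg - W p1) - la *\<^sub>R W Hz) = z1 - (z + (la*ga) *\<^sub>R (zg - z1) - la *\<^sub>R W Hz)"
    unfolding hp hp1 hpg by (simp add: algebra_simps)
  then show ?thesis using z by simp
qed

lemma xstep_y:
  fixes x x1 xg gg y1 ys :: "'a::real_vector" and eta alpha :: real
  assumes step: "x1 = x + (eta * alpha) *\<^sub>R (xg - x1) - eta *\<^sub>R gg + eta *\<^sub>R y1" and eta: "eta \<noteq> 0"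
  shows "y1 - ys = (1/eta) *\<^sub>R (x1 - x) + (- alpha) *\<^sub>R (xg - x1) + (gg - ys)"
proof -
  have z: "x1 - (x + (eta * alpha) *\<^sub>R (xg - x1) - eta *\<^sub>R gg + eta *\<^sub>R y1) = 0" by (rule right_minus_eq[THEN iffD2, OF step])
  have "eta *\<^sub>R ((1/eta) *\<^sub>R (x1 - x) + (- alpha) *\<^sub>R (xg - x1) + (gg - ys) - (y1 - ys))
        = x1 - (x + (eta * alpha) *\<^sub>R (xg - x1) - eta *\<^sub>R gg + eta *\<^sub>R y1)"
    using eta by (simp add: algebra_simps)
  then have "eta *\<^sub>R ((1/eta) *\<^sub>R (x1 - x) + (- alpha) *\<^sub>R (xg - x1) + (gg - ys) - (y1 - ys)) = 0" using z by simp
  then show ?thesis using eta by simp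
qed

lemma final_comb:
  fixes ie al k m he hL P1 P0 S Sg Gn Dr1 Dr0 C it be nu A1 A0 Ad G2 Gd HyA XA il ga Q1 Q0 Qd Qg Qgd HzC
    s2 ms H1 H0 Hst Hg Hfg rho c0 :: real
  assumes X: "ie * P1 + al * P1 + k * Dr1 + he * S + al * Sg + hL * Gn \<le> ie * P0 + m * Dr0 + 2 * C"
    and Y: "it * A1 - it * A0 + it * Ad = be * G2 - be * A1 - be * Gd - 2 * HyA + 2 * nu * A1 - 2 * XA"
    and Z: "il * Q1 - il * Q0 + il * Qd = ga * Qg - ga * Q1 - ga * Qgd - 2 * HzC"
    and H: "- 2 * HyA - 2 * HzC = - (s2 * H1) + ms * H0 + s2 * Hst - 2 * Hg - ms * Hfg"
    and Hb1: "s2 * Hst \<le> it * Ad + il * Qd"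
    and Hb2: "be * G2 + ga * Qg \<le> 2 * Hg"
    and n1: "0 \<le> ms * Hfg" and n2: "0 \<le> ga * Qgd" and n3: "0 \<le> be * Gd"
    and Yb: "c0 * A1 \<le> he * S + al * Sg + hL * Gn"
    and CX: "C = XA"
    and c0d: "c0 * A1 = rho * it * A1 + 2 * nu * A1 - be * A1"
    and cX: "(1 + rho) * ie * P1 \<le> ie * P1 + al * P1"
    and cZ: "(1 + rho) * il * Q1 \<le> il * Q1 + ga * Q1"
    and cY: "(1 + rho) * it * A1 = it * A1 + rho * it * A1"
  shows "(1 + rho) * ie * P1 + (1 + rho) * it * A1 + (1 + rho) * il * Q1 + k * Dr1 + s2 * H1
     \<le> ie * P0 + it * A0 + il * Q0 + m * Dr0 + ms * H0"
  using assms by linarith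

lemma final_step:
  fixes ie it il P1 A1 Q1 P0 A0 Q0 k m s2 ms Dr1 Dr0 H1 H0 rho Psi1 Psi0 :: real
  assumes comb: "(1 + rho) * ie * P1 + (1 + rho) * it * A1 + (1 + rho) * il * Q1 + k * Dr1 + s2 * H1
     \<le> ie * P0 + it * A0 + il * Q0 + m * Dr0 + ms * H0"
    and P1d: "Psi1 = (1 + rho) * (ie * P1 + it * A1 + il * Q1) + k * Dr1 + s2 * H1"
    and P0d: "Psi0 = (1 + rho) * (ie * P0 + it * A0 + il * Q0) + k * Dr0 + s2 * H0"
    and rho: "0 < rho" and Dr0: "0 \<le> Dr0" and H0: "0 \<le> H0"
    and mk: "m * (1 + rho) \<le> k" and ms: "ms * (1 + rho) \<le> s2"
  shows "Psi1 \<le> (1 - 1 / (1 + 1 / rho)) * Psi0"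
proof -
  have r1: "1 - 1 / (1 + 1 / rho) = 1 / (1 + rho)" using rho by (simp add: field_simps)
  have a: "(1 + rho) * (m * Dr0) \<le> k * Dr0" using mk Dr0 by (metis mult.commute mult.left_commute mult_right_mono)
  have b: "(1 + rho) * (ms * H0) \<le> s2 * H0" using ms H0 by (metis mult.commute mult.left_commute mult_right_mono)
  define R where "R = ie * P0 + it * A0 + il * Q0 + m * Dr0 + ms * H0"
  have "Psi1 \<le> R" using comb unfolding P1d R_def by (simp add: algebra_simps)
  moreover have "(1 + rho) * R \<le> Psi0" unfolding P0d R_def using a b by (simp add: algebra_simps)
  ultimately have "(1 + rho) * Psi1 \<le> Psi0" using rho by (meson less_eq_real_def mult_left_mono order_trans add_pos_pos zero_less_one)
  then show ?thesis unfolding r1 using rho by (simp add: field_simps mult.commute)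
qed


theorem mainTheorem4:
  fixes F :: "real^'d^'n \<Rightarrow> real"
    and gradF :: "real^'d^'n \<Rightarrow> real^'d^'n"
    and W :: "real^'d^'n \<Rightarrow> real^'d^'n"
    and mu L :: real
    and xstar :: "real^'d^'n"
    and x y z xf yf zf :: "nat \<Rightarrow> real^'d^'n"
    and tau alpha eta sigma nu beta theta gamma lam rho :: real
    and Psi :: "nat \<Rightarrow> real"
  assumes n2: "CARD('n) \<ge> 2"
    and F_grad: "\<And>u. (F has_derivative (\<lambda>h. gradF u \<bullet> h)) (at u)"
    and mu_pos: "0 < mu" and mu_le_L: "mu \<le> L"
    and F_sc: "strongly_convex mu F"
    and F_smooth: "lipschitz_gradient L gradF"
    and W_lin: "linear W"
    and W_sym: "\<And>u v. W u \<bullet> v = u \<bullet> W v"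
    and W_psd: "\<And>u. 0 \<le> W u \<bullet> u"
    and W_ker: "{u. W u = 0} = consensus"
    and xstar_cons: "xstar \<in> consensus"
    and xstar_min: "\<And>u. u \<in> consensus \<Longrightarrow> F xstar \<le> F u"
    and tau_def: "tau = 1/2 * sqrt (mu / L)"
    and alpha_def: "alpha = mu / 2"
    and eta_def: "eta = 1 / (2 * sqrt (mu * L))"
    and sigma_def: "sigma = 1/18 * sqrt (mu * lambda_min_pos W / (L * lambda_max W))"
    and nu_def: "nu = 3 / (80 * L)"
    and beta_def: "beta = 1 / (80 * L)"
    and theta_def: "theta = 18 * sqrt (mu * L * lambda_max W) / (5 * sqrt (lambda_min_pos W))"
    and gamma_def: "gamma = lambda_min_pos W / (80 * L)"
    and lam_def: "lam = 9 * sqrt (mu * L) / (2 * sqrt (lambda_min_pos W * lambda_max W))"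
    and z0: "z 0 \<in> range W"
    and xf0: "xf 0 = x 0" and yf0: "yf 0 = y 0" and zf0: "zf 0 = z 0"
    and step_x: "\<And>k. x (Suc k) = x k
        + (eta * alpha) *\<^sub>R ((tau *\<^sub>R x k + (1 - tau) *\<^sub>R xf k) - x (Suc k))
        - eta *\<^sub>R (gradF (tau *\<^sub>R x k + (1 - tau) *\<^sub>R xf k)
                     - (mu / 2) *\<^sub>R (tau *\<^sub>R x k + (1 - tau) *\<^sub>R xf k))
        + eta *\<^sub>R y (Suc k)"
    and step_y: "\<And>k. y (Suc k) = y k
        + (theta * beta) *\<^sub>R ((sigma *\<^sub>R y k + (1 - sigma) *\<^sub>R yf k) - y (Suc k))
        - theta *\<^sub>R ((2 / mu) *\<^sub>R ((sigma *\<^sub>R y k + (1 - sigma) *\<^sub>R yf k)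
                                   + (sigma *\<^sub>R z k + (1 - sigma) *\<^sub>R zf k))
                      + nu *\<^sub>R (sigma *\<^sub>R y k + (1 - sigma) *\<^sub>R yf k))
        + (theta * nu) *\<^sub>R y (Suc k)
        - theta *\<^sub>R x (Suc k)"
    and step_z: "\<And>k. z (Suc k) = z k
        + (lam * gamma) *\<^sub>R ((sigma *\<^sub>R z k + (1 - sigma) *\<^sub>R zf k) - z (Suc k))
        - lam *\<^sub>R W ((2 / mu) *\<^sub>R ((sigma *\<^sub>R y k + (1 - sigma) *\<^sub>R yf k)
                                    + (sigma *\<^sub>R z k + (1 - sigma) *\<^sub>R zf k)))"
    and step_xf: "\<And>k. xf (Suc k) = (tau *\<^sub>R x k + (1 - tau) *\<^sub>R xf k)
        + (2 * tau / (2 - tau)) *\<^sub>R (x (Suc k) - x k)"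
    and step_yf: "\<And>k. yf (Suc k) = (sigma *\<^sub>R y k + (1 - sigma) *\<^sub>R yf k)
        + sigma *\<^sub>R (y (Suc k) - y k)"
    and step_zf: "\<And>k. zf (Suc k) = (sigma *\<^sub>R z k + (1 - sigma) *\<^sub>R zf k)
        + sigma *\<^sub>R (z (Suc k) - z k)"
    and rho_def: "rho = 1/18 * sqrt (mu * lambda_min_pos W / (L * lambda_max W))"
    and Psi_def: "Psi = (\<lambda>k.
        (1 + rho) * (1 / eta * (norm (x k - xstar))\<^sup>2
                     + 1 / theta * (norm (y k - (gradF xstar - (mu / 2) *\<^sub>R xstar)))\<^sup>2
                     + 1 / lam * Wdag_sqnorm W (z k - (- gradF xstar)))
        + (2 - tau) / tau *
            bregman (\<lambda>u. F u - mu / 4 * (norm u)\<^sup>2) (\<lambda>u. gradF u - (mu / 2) *\<^sub>R u) (xf k) xstar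
        + 2 / sigma *
            bregman (\<lambda>(u, v). 1 / mu * (norm (u + v))\<^sup>2 + nu / 2 * (norm u)\<^sup>2)
                    (\<lambda>(u, v). ((2 / mu) *\<^sub>R (u + v) + nu *\<^sub>R u, (2 / mu) *\<^sub>R (u + v)))
                    (yf k, zf k)
                    (gradF xstar - (mu / 2) *\<^sub>R xstar, - gradF xstar))"
  shows "\<forall>k. Psi (Suc k) \<le> (1 - 1 / (1 + 1 / rho)) * Psi k"
proof -
  have Lp: "0 < L" using mu_pos mu_le_L by linarith
  obtain i j :: 'n where ij: "i \<noteq> j"
  proof -
    have "\<not> (\<forall>i j::'n. i = j)"
    proof
      assume h: "\<forall>i j::'n. i = j"
      have "(UNIV::'n set) \<subseteq> {undefined}" using h by auto
      hence "CARD('n) \<le> card {undefined::'n}" by (intro card_mono) auto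
      with n2 show False by simp
    qed
    then show ?thesis using that by blast
  qed
  define v0 :: "real^'d^'n" where "v0 = (\<chi> k. if k = i then (\<chi> _. 1) else 0)"
  have "v0 $ i \<noteq> v0 $ j"
  proof -
    have "(\<chi> _. (1::real)) \<noteq> (0::real^'d)"
    proof
      assume "(\<chi> _. (1::real)) = (0::real^'d)"
      hence "(\<chi> _. (1::real)) $ (undefined::'d) = (0::real^'d) $ undefined" by simp
      thus False by simp
    qed
    then show ?thesis unfolding v0_def using ij by simp
  qed
  hence "v0 \<notin> consensus" unfolding consensus_def by blast
  hence Wnz: "W v0 \<noteq> 0" using W_ker by blast
  note sp = spectral[OF W_lin W_sym W_psd Wnz]
  define lmin where "lmin = lambda_min_pos W"
  define lmax where "lmax = lambda_max W"
  have lminp: "0 < lmin" unfolding lmin_def by (rule sp(3))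
  have lle: "lmin \<le> lmax" unfolding lmin_def lmax_def by (rule sp(4))
  define a where "a = sqrt mu"
  define b where "b = sqrt L"
  define p where "p = sqrt lmin"
  define q where "q = sqrt lmax"
  have apos: "0 < a" unfolding a_def using mu_pos by simp
  have ab: "a \<le> b" unfolding a_def b_def using mu_le_L by simp
  have ppos: "0 < p" unfolding p_def using lminp by simp
  have pq: "p \<le> q" unfolding p_def q_def using lle by simp
  have muq: "mu = a^2" unfolding a_def using mu_pos by simp
  have Lq: "L = b^2" unfolding b_def using Lp by simp
  have lminq: "lmin = p^2" unfolding p_def using lminp by simp
  have lmaxq: "lmax = q^2" unfolding q_def using lminp lle by simp
  have bpos: "0 < b" using apos ab by simp
  have qpos: "0 < q" using ppos pq by simp
  have teq: "tau = a/(2*b)" unfolding tau_def a_def b_def by (simp add: real_sqrt_divide)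
  have eeq: "eta = 1/(2*(a*b))" unfolding eta_def a_def b_def by (simp add: real_sqrt_mult)
  have aleq: "alpha = a^2/2" unfolding alpha_def muq ..
  have seq: "sigma = a*p/(18*(b*q))" unfolding sigma_def a_def b_def p_def q_def lmin_def[symmetric] lmax_def[symmetric]
    by (simp add: real_sqrt_mult real_sqrt_divide)
  have nueq: "nu = 3/(80*b^2)" unfolding nu_def Lq ..
  have beq: "beta = 1/(80*b^2)" unfolding beta_def Lq ..
  have theq: "theta = 18*(a*b*q)/(5*p)" unfolding theta_def a_def b_def p_def q_def lmin_def[symmetric] lmax_def[symmetric]
    by (simp add: real_sqrt_mult)
  have geq: "gamma = p^2/(80*b^2)" unfolding gamma_def lmin_def[symmetric] lminq Lq ..
  have lameq: "lam = 9*(a*b)/(2*(p*q))" unfolding lam_def a_def b_def p_def q_def lmin_def[symmetric] lmax_def[symmetric]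
    by (simp add: real_sqrt_mult)
  have rho_sigma: "rho = sigma" unfolding rho_def sigma_def ..
  note PA = params_abs[OF apos ab ppos pq]
  have tpos: "0 < tau" unfolding teq by (rule PA(1))
  have tlt: "tau < 1" unfolding teq by (rule PA(2))
  have epos: "0 < eta" unfolding eeq by (rule PA(3))
  have alpos: "0 < alpha" unfolding aleq by (rule PA(4))
  have spos: "0 < sigma" unfolding seq by (rule PA(5))
  have nupos: "0 < nu" unfolding nueq by (rule PA(6))
  have bepos: "0 < beta" unfolding beq by (rule PA(7))
  have thpos: "0 < theta" unfolding theq by (rule PA(8))
  have gpos: "0 < gamma" unfolding geq by (rule PA(9))
  have lampos: "0 < lam" unfolding lameq by (rule PA(10))
  have Pt: "2 * tau * L / (2 - tau) \<le> 1 / (2 * eta)" unfolding teq eeq Lq by (rule PA(11))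
  have Pea: "sigma \<le> eta * alpha" unfolding seq eeq aleq by (rule PA(12))
  have Plg: "sigma \<le> lam * gamma" unfolding seq lameq geq by (rule PA(13))
  have Pst: "2 * sigma \<le> tau" unfolding seq teq by (rule PA(14))
  have Pth: "4 * sigma / mu + sigma * nu \<le> 1 / theta" unfolding seq muq nueq theq by (rule PA(15))
  have Plm: "4 * sigma / mu \<le> 1 / (lam * lmax)" unfolding seq muq lameq lmaxq by (rule PA(16))
  have Pb1: "beta \<le> 1 / mu" unfolding beq muq by (rule PA(17))
  have Pb3: "3 * beta \<le> nu" unfolding beq nueq by (rule PA(18))
  have Pgb: "gamma = beta * lmin" unfolding geq beq lminq by (rule PA(19))
  have Pc1: "3 * (sigma / theta + 2 * nu - beta) * (1/eta)^2 \<le> 1 / (2 * eta)" unfolding seq theq nueq beq eeq by (rule PA(20))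
  have Pc2: "3 * (sigma / theta + 2 * nu - beta) * (- alpha)^2 \<le> alpha" unfolding seq theq nueq beq aleq by (rule PA(21))
  have Pc3: "3 * (sigma / theta + 2 * nu - beta) \<le> 1 / (2 * L)" unfolding seq theq nueq beq Lq by (rule PA(22))
  have Pc0: "0 \<le> sigma / theta + 2 * nu - beta" unfolding seq theq nueq beq by (rule PA(23))
  have sub: "subspace (range W)" using W_lin by (simp add: linear_subspace_image)
  have zr: "z k' \<in> range W \<and> zf k' \<in> range W" for k'
  proof (induction k')
    case 0 show ?case using z0 zf0 by simp
  next
    case (Suc k')
    have zgr: "sigma *\<^sub>R z k' + (1 - sigma) *\<^sub>R zf k' \<in> range W" using Suc sub by (simp add: subspace_add subspace_scale)
    have eq: "(1 + lam * gamma) *\<^sub>R z (Suc k') = z k' + (lam * gamma) *\<^sub>R (sigma *\<^sub>R z k' + (1 - sigma) *\<^sub>R zf k')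
        - lam *\<^sub>R W ((2 / mu) *\<^sub>R ((sigma *\<^sub>R y k' + (1 - sigma) *\<^sub>R yf k') + (sigma *\<^sub>R z k' + (1 - sigma) *\<^sub>R zf k')))"
      by (rule step_solve[OF step_z[of k']])
    have "z k' + (lam * gamma) *\<^sub>R (sigma *\<^sub>R z k' + (1 - sigma) *\<^sub>R zf k')
        - lam *\<^sub>R W ((2 / mu) *\<^sub>R ((sigma *\<^sub>R y k' + (1 - sigma) *\<^sub>R yf k') + (sigma *\<^sub>R z k' + (1 - sigma) *\<^sub>R zf k'))) \<in> range W"
      using Suc zgr sub by (intro subspace_diff subspace_add subspace_scale) auto
    hence "(1 / (1 + lam * gamma)) *\<^sub>R ((1 + lam * gamma) *\<^sub>R z (Suc k')) \<in> range W"
      unfolding eq using sub by (simp add: subspace_scale)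
    moreover have "1 + lam * gamma \<noteq> 0" using mult_pos_pos[OF lampos gpos] by linarith
    ultimately have z1r: "z (Suc k') \<in> range W" by simp
    have "zf (Suc k') \<in> range W" unfolding step_zf using zgr z1r Suc sub
      by (intro subspace_add subspace_scale subspace_diff) auto
    then show ?case using z1r by simp
  qed
  have Wx: "W xstar = 0" using xstar_cons W_ker by blast
  have gperp: "c \<bullet> gradF xstar = 0" if "W c = 0" for c
  proof -
    have cc: "c \<in> consensus" using that W_ker by blast
    have "gradF xstar \<bullet> c = 0"
    proof (rule fermat_dir[OF F_grad])
      fix t :: real
      have "xstar + t *\<^sub>R c \<in> consensus" unfolding consensus_def mem_Collect_eq
      proof (intro allI)
        fix i j :: 'n
        have "xstar $ i = xstar $ j" "c $ i = c $ j" using xstar_cons cc unfolding consensus_def by auto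
        then show "(xstar + t *\<^sub>R c) $ i = (xstar + t *\<^sub>R c) $ j" by simp
      qed
      then show "F xstar \<le> F (xstar + t *\<^sub>R c)" by (rule xstar_min)
    qed
    then show ?thesis by (simp add: inner_commute)
  qed
  have gr: "gradF xstar \<in> range W" by (rule perp_range[OF W_lin W_sym gperp])
  define ys where "ys = gradF xstar - (mu / 2) *\<^sub>R xstar"
  define zs where "zs = - gradF xstar"
  have zsr: "zs \<in> range W" unfolding zs_def using gr sub by (simp add: subspace_neg)
  have yz: "(2/mu) *\<^sub>R (ys + zs) = - xstar" unfolding ys_def zs_def using mu_pos by simp
  define r where "r = (\<lambda>u. F u - mu / 4 * (norm u)\<^sup>2)"
  define dr where "dr = (\<lambda>u. gradF u - (mu / 2) *\<^sub>R u)"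
  have RF1: "mu/4 * (norm (u - v))^2 \<le> bregman r dr u v" for u v
    unfolding r_def dr_def by (rule rfacts(1)[OF F_grad F_sc F_smooth mu_pos mu_le_L])
  have RF2: "bregman r dr u v \<le> L/2 * (norm (u - v))^2" for u v
    unfolding r_def dr_def by (rule rfacts(2)[OF F_grad F_sc F_smooth mu_pos mu_le_L])
  have RF3: "1/(2*L) * (norm (dr u - dr v))^2 \<le> bregman r dr u v" for u v
    unfolding r_def dr_def by (rule rfacts(3)[OF F_grad F_sc F_smooth mu_pos mu_le_L])
  have drs: "dr xstar = ys" unfolding dr_def ys_def by simp
  define pp where "pp = (\<lambda>k. Wdag W (z k - zs))"
  define ppf where "ppf = (\<lambda>k. Wdag W (zf k - zs))"
  have ppr: "pp k \<in> range W \<and> W (pp k) = z k - zs" for k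
    unfolding pp_def using zr[of k] zsr sub by (intro Wdag_prop[OF W_lin W_sym] subspace_diff) auto
  have ppfr: "ppf k \<in> range W \<and> W (ppf k) = zf k - zs" for k
    unfolding ppf_def using zr[of k] zsr sub by (intro Wdag_prop[OF W_lin W_sym] subspace_diff) auto
  have Psi_eq: "Psi k = (1 + rho) * ((1/eta) * (norm (x k - xstar))^2 + (1/theta) * (norm (y k - ys))^2 + (1/lam) * (W (pp k) \<bullet> pp k))
      + ((2 - tau) / tau) * (r (xf k) - r xstar - ys \<bullet> (xf k - xstar)) + (2 / sigma) * Qh mu nu (yf k - ys) (zf k - zs)" for k
  proof -
    have w: "Wdag_sqnorm W (z k - - gradF xstar) = W (pp k) \<bullet> pp k"
      unfolding Wdag_sqnorm_def using ppr[of k] unfolding pp_def zs_def by (simp add: inner_commute)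
    have h: "bregman (\<lambda>(u, v). 1 / mu * (norm (u + v))\<^sup>2 + nu / 2 * (norm u)\<^sup>2)
                    (\<lambda>(u, v). ((2 / mu) *\<^sub>R (u + v) + nu *\<^sub>R u, (2 / mu) *\<^sub>R (u + v)))
                    (yf k, zf k) (ys, zs) = Qh mu nu (yf k - ys) (zf k - zs)"
      using mu_pos by (intro bregman_h) simp
    have br: "bregman (\<lambda>u. F u - mu / 4 * (norm u)\<^sup>2) (\<lambda>u. gradF u - (mu / 2) *\<^sub>R u) (xf k) xstar
        = r (xf k) - r xstar - ys \<bullet> (xf k - xstar)"
      unfolding bregman_def r_def[symmetric] dr_def[symmetric] drs ..
    show ?thesis unfolding Psi_def using w h br unfolding ys_def zs_def by simp
  qed
  show ?thesis
  proof (intro allI)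
    fix k
    define xg where "xg = tau *\<^sub>R x k + (1 - tau) *\<^sub>R xf k"
    define yg where "yg = sigma *\<^sub>R y k + (1 - sigma) *\<^sub>R yf k"
    define zg where "zg = sigma *\<^sub>R z k + (1 - sigma) *\<^sub>R zf k"
    define a0 where "a0 = y k - ys"
    define af where "af = yf k - ys"
    define a1 where "a1 = y (Suc k) - ys"
    define g where "g = sigma *\<^sub>R a0 + (1 - sigma) *\<^sub>R af"
    define p0 where "p0 = pp k"
    define pf where "pf = ppf k"
    define p1 where "p1 = pp (Suc k)"
    define pg where "pg = sigma *\<^sub>R p0 + (1 - sigma) *\<^sub>R pf"
    define af1 where "af1 = yf (Suc k) - ys"
    define cf1 where "cf1 = zf (Suc k) - zs"
    have Wp0: "W p0 = z k - zs" and p0r: "p0 \<in> range W" using ppr[of k] unfolding p0_def by auto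
    have Wpf: "W pf = zf k - zs" and pfr: "pf \<in> range W" using ppfr[of k] unfolding pf_def by auto
    have Wp1: "W p1 = z (Suc k) - zs" and p1r: "p1 \<in> range W" using ppr[of "Suc k"] unfolding p1_def by auto
    have hhz: "W pg = sigma *\<^sub>R W p0 + (1 - sigma) *\<^sub>R W pf"
      unfolding pg_def using W_lin by (simp add: linear_add linear_scale)
    have Wpg: "W pg = zg - zs" unfolding hhz Wp0 Wpf zg_def by (simp add: algebra_simps)
    have pgr: "pg \<in> range W" unfolding pg_def using p0r pfr sub by (intro subspace_add subspace_scale) auto
    have hyg: "yg = g + ys" unfolding yg_def g_def a0_def af_def by (simp add: algebra_simps)
    have hzg: "zg = W pg + zs" using Wpg by simp
    have e_yz: "(2/mu) *\<^sub>R (yg + zg) = (2/mu) *\<^sub>R (g + W pg) - xstar"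
    proof -
      have "yg + zg = (g + W pg) + (ys + zs)" unfolding hyg hzg by (simp add: algebra_simps)
      then have "(2/mu) *\<^sub>R (yg + zg) = (2/mu) *\<^sub>R (g + W pg) + (2/mu) *\<^sub>R (ys + zs)" by (simp add: scaleR_add_right)
      then show ?thesis unfolding yz by simp
    qed
    have sx: "x (Suc k) = x k + (eta * alpha) *\<^sub>R (xg - x (Suc k)) - eta *\<^sub>R dr xg + eta *\<^sub>R y (Suc k)"
      unfolding dr_def xg_def by (rule step_x)
    have sxf: "xf (Suc k) = xg + (2 * tau / (2 - tau)) *\<^sub>R (x (Suc k) - x k)" unfolding xg_def by (rule step_xf)
    have XR: "(1/eta) * (norm (x (Suc k) - xstar))^2 + alpha * (norm (x (Suc k) - xstar))^2
        + ((2-tau)/tau) * (r (xf (Suc k)) - r xstar - ys \<bullet> (xf (Suc k) - xstar))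
        + 1/(2*eta) * (norm (x (Suc k) - x k))^2 + alpha * (norm (xg - x (Suc k)))^2 + 1/(2*L) * (norm (dr xg - ys))^2
      \<le> (1/eta) * (norm (x k - xstar))^2 + (2*(1-tau)/tau) * (r (xf k) - r xstar - ys \<bullet> (xf k - xstar))
        + 2 * ((y (Suc k) - ys) \<bullet> (x (Suc k) - xstar))"
    proof (rule xblock[OF tpos tlt epos _ Lp _ sxf sx])
      show "0 \<le> alpha" using alpos by simp
      show "xg = tau *\<^sub>R x k + (1 - tau) *\<^sub>R xf k" by (rule xg_def)
      show "r (xf (Suc k)) - r xg - dr xg \<bullet> (xf (Suc k) - xg) \<le> L/2 * (norm (xf (Suc k) - xg))^2"
        using RF2[of "xf (Suc k)" xg] unfolding bregman_def .
      have "0 \<le> mu/4 * (norm (xf k - xg))^2" using mu_pos by simp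
      then show "0 \<le> r (xf k) - r xg - dr xg \<bullet> (xf k - xg)"
        using RF1[of "xf k" xg] unfolding bregman_def by linarith
      have "alpha * (norm (xg - xstar))^2 = mu/4 * (norm (xg - xstar))^2 + mu/4 * (norm (xstar - xg))^2"
        unfolding alpha_def by (simp add: norm_minus_commute)
      then show "alpha * (norm (xg - xstar))^2 \<le> (r xg - r xstar - ys \<bullet> (xg - xstar)) + (r xstar - r xg - dr xg \<bullet> (xstar - xg))"
        using RF1[of xg xstar] RF1[of xstar xg] unfolding bregman_def drs by linarith
      show "1/(2*L) * (norm (dr xg - ys))^2 \<le> r xstar - r xg - dr xg \<bullet> (xstar - xg)"
        using RF3[of xstar xg] unfolding bregman_def drs by (simp add: norm_minus_commute)
      show "2 * tau * L / (2 - tau) \<le> 1 / (2 * eta)" by (rule Pt)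
    qed
    have ystp: "a1 - a0 = (theta*beta) *\<^sub>R (g - a1) - theta *\<^sub>R ((2/mu) *\<^sub>R (g + W pg) + nu *\<^sub>R g) + (theta*nu) *\<^sub>R a1 - theta *\<^sub>R (x (Suc k) - xstar)"
      unfolding a1_def a0_def by (rule ystep[OF step_y[of k, folded yg_def zg_def] hyg hzg yz])
    note YR = yblock[OF thpos ystp]
    have szp: "W p1 - W p0 = (lam*gamma) *\<^sub>R (W pg - W p1) - lam *\<^sub>R W ((2/mu) *\<^sub>R (g + W pg))"
      by (rule zstep[OF step_z[of k, folded yg_def zg_def] W_lin Wp0 Wp1 Wpg e_yz Wx])
    note ZR = zblock[OF W_lin W_sym lampos szp]
    have haf1: "af1 = g + sigma *\<^sub>R (a1 - a0)"
      unfolding af1_def a1_def a0_def step_yf[of k, folded yg_def] hyg by (simp add: algebra_simps)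
    have hcf1: "cf1 = W pg + sigma *\<^sub>R (W p1 - W p0)"
      unfolding cf1_def Wp1 Wp0 step_zf[of k, folded zg_def] hzg by (simp add: algebra_simps)
    have hgd: "g = sigma *\<^sub>R a0 + (1 - sigma) *\<^sub>R af" by (rule g_def)
    note HR = hblock[OF spos mu_pos hgd hhz haf1 hcf1]
    have nu0: "0 \<le> nu" using nupos by simp
    have lmaxp: "0 < lmax" using lminp lle by simp
    have eQ: "(norm (W p1 - W p0))^2 \<le> lmax * (W (p1 - p0) \<bullet> (p1 - p0))"
      using W_S2[OF W_lin W_sym W_psd Wnz, of "p1 - p0"] unfolding lmax_def linear_diff[OF W_lin] .
    have Hb1R: "(2/sigma) * Qh mu nu (af1 - g) (cf1 - W pg) \<le> (1/theta) * (norm (a1 - a0))^2 + (1/lam) * (W (p1 - p0) \<bullet> (p1 - p0))"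
    proof -
      have "af1 - g = sigma *\<^sub>R (a1 - a0)" unfolding haf1 by simp
      moreover have "cf1 - W pg = sigma *\<^sub>R (W p1 - W p0)" unfolding hcf1 by simp
      ultimately show ?thesis using hb1[OF spos mu_pos nu0 lampos lmaxp Pth Plm eQ] by simp
    qed
    have qg: "lmin * (W pg \<bullet> pg) \<le> (norm (W pg))^2"
      using W_S3[OF W_lin W_sym W_psd Wnz pgr] unfolding lmin_def .
    have Hb2R: "beta * (norm g)^2 + gamma * (W pg \<bullet> pg) \<le> 2 * Qh mu nu g (W pg)"
      using bepos Pb1 Pb3 mu_pos Pgb qg by (intro hb2) auto
    have s1: "0 \<le> 1 - sigma" using Pst tlt by simp
    have n1: "0 \<le> (2*(1-sigma)/sigma) * Qh mu nu (af - g) (W pf - W pg)"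
    proof (rule mult_nonneg_nonneg)
      show "0 \<le> 2*(1-sigma)/sigma" using s1 spos by simp
    qed (rule Qh_nonneg[OF mu_pos nu0])
    have n2: "0 \<le> gamma * (W (pg - p1) \<bullet> (pg - p1))" using gpos W_psd by simp
    have n3: "0 \<le> beta * (norm (g - a1))^2" using bepos by simp
    have a1x: "a1 = (1/eta) *\<^sub>R (x (Suc k) - x k) + (- alpha) *\<^sub>R (xg - x (Suc k)) + (dr xg - ys)"
      unfolding a1_def using epos by (intro xstep_y[OF sx]) simp
    have YbR: "(sigma / theta + 2 * nu - beta) * (norm a1)^2 \<le> 1/(2*eta) * (norm (x (Suc k) - x k))^2 + alpha * (norm (xg - x (Suc k)))^2 + 1/(2*L) * (norm (dr xg - ys))^2"
      by (rule yb[OF a1x Pc0 Pc1 Pc2 Pc3])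
    have CX: "(y (Suc k) - ys) \<bullet> (x (Suc k) - xstar) = (x (Suc k) - xstar) \<bullet> a1"
      unfolding a1_def by (simp add: inner_commute)
    have c0d: "(sigma / theta + 2 * nu - beta) * (norm a1)^2 = rho * (1/theta) * (norm a1)^2 + 2 * nu * (norm a1)^2 - beta * (norm a1)^2"
      unfolding rho_sigma by (simp add: algebra_simps)
    have cX: "(1 + rho) * (1/eta) * (norm (x (Suc k) - xstar))^2 \<le> (1/eta) * (norm (x (Suc k) - xstar))^2 + alpha * (norm (x (Suc k) - xstar))^2"
    proof -
      have "rho * (1/eta) \<le> alpha" using Pea epos unfolding rho_sigma by (simp add: field_simps)
      then have "(rho * (1/eta)) * (norm (x (Suc k) - xstar))^2 \<le> alpha * (norm (x (Suc k) - xstar))^2" by (rule mult_right_mono) simp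
      moreover have "(1 + rho) * (1/eta) * (norm (x (Suc k) - xstar))^2 = (1/eta) * (norm (x (Suc k) - xstar))^2 + (rho * (1/eta)) * (norm (x (Suc k) - xstar))^2"
        by (simp add: algebra_simps add_divide_distrib)
      ultimately show ?thesis by linarith
    qed
    have cZ: "(1 + rho) * (1/lam) * (W p1 \<bullet> p1) \<le> (1/lam) * (W p1 \<bullet> p1) + gamma * (W p1 \<bullet> p1)"
    proof -
      have "rho * (1/lam) \<le> gamma" using Plg lampos unfolding rho_sigma by (simp add: field_simps)
      then have "(rho * (1/lam)) * (W p1 \<bullet> p1) \<le> gamma * (W p1 \<bullet> p1)" using W_psd by (rule mult_right_mono)
      moreover have "(1 + rho) * (1/lam) * (W p1 \<bullet> p1) = (1/lam) * (W p1 \<bullet> p1) + (rho * (1/lam)) * (W p1 \<bullet> p1)"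
        by (simp add: algebra_simps add_divide_distrib)
      ultimately show ?thesis by linarith
    qed
    have cY: "(1 + rho) * (1/theta) * (norm a1)^2 = (1/theta) * (norm a1)^2 + rho * (1/theta) * (norm a1)^2"
      by (simp add: algebra_simps add_divide_distrib)
    note comb = final_comb[OF XR YR ZR HR Hb1R Hb2R n1 n2 n3 YbR CX c0d cX cZ cY]
    have P1d: "Psi (Suc k) = (1 + rho) * ((1/eta) * (norm (x (Suc k) - xstar))^2 + (1/theta) * (norm a1)^2 + (1/lam) * (W p1 \<bullet> p1))
       + ((2-tau)/tau) * (r (xf (Suc k)) - r xstar - ys \<bullet> (xf (Suc k) - xstar)) + (2/sigma) * Qh mu nu af1 cf1"
      unfolding Psi_eq a1_def p1_def af1_def cf1_def ..
    have P0d: "Psi k = (1 + rho) * ((1/eta) * (norm (x k - xstar))^2 + (1/theta) * (norm a0)^2 + (1/lam) * (W p0 \<bullet> p0))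
       + ((2-tau)/tau) * (r (xf k) - r xstar - ys \<bullet> (xf k - xstar)) + (2/sigma) * Qh mu nu af (W pf)"
      unfolding Psi_eq a0_def p0_def af_def Wpf ..
    have rpos: "0 < rho" using spos rho_sigma by simp
    have Dr0: "0 \<le> r (xf k) - r xstar - ys \<bullet> (xf k - xstar)"
    proof -
      have "0 \<le> mu/4 * (norm (xf k - xstar))^2" using mu_pos by simp
      then show ?thesis using RF1[of "xf k" xstar] unfolding bregman_def drs by linarith
    qed
    have H0: "0 \<le> Qh mu nu af (W pf)" by (rule Qh_nonneg[OF mu_pos nu0])
    have mk: "(2*(1-tau)/tau) * (1 + rho) \<le> (2-tau)/tau"
    proof -
      have "2*(1-tau)*(1+rho) \<le> 2 - tau"
      proof -
        have "2 * rho * (1 - tau) \<le> 2 * rho" using rpos tpos by simp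
        moreover have "2 * rho \<le> tau" using Pst rho_sigma by simp
        ultimately show ?thesis by (simp add: algebra_simps)
      qed
      then have "(2*(1-tau)*(1+rho)) / tau \<le> (2 - tau) / tau" using tpos by (intro divide_right_mono) auto
      then show ?thesis by simp
    qed
    have ms: "(2*(1-sigma)/sigma) * (1 + rho) \<le> 2/sigma"
    proof -
      have "2*(1-sigma)*(1+sigma) \<le> 2" by (simp add: algebra_simps)
      then show ?thesis using spos unfolding rho_sigma by (simp add: field_simps)
    qed
    show "Psi (Suc k) \<le> (1 - 1 / (1 + 1 / rho)) * Psi k"
      by (rule final_step[OF comb P1d P0d rpos Dr0 H0 mk ms])
  qed
qed


end
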